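(* Let $n\in\mathbb{N}$ and $\hbar\in\mathbb{R}\setminus(\{0\}\cup\{1/k:k\in\mathbb{N}\})$. Then the map $\Psi_\hbar:\bigoplus_k\mathscr{P}^{k,k}(\mathbb{C}^{1+n})\to\mathscr{P}(\mathbb{CP}^n)$ is surjective, its kernel is exactly the $^*$-ideal $\langle\mathcal{J}-1\rangle$ of $(\bigoplus_k\mathscr{P}^{k,k}(\mathbb{C}^{1+n}),\star_\hbar)$ generated by $\mathcal{J}-\mathbb{1}$, and $\Psi_\hbar(\overline{f})([w])=\overline{\Psi_\hbar(f)([w])}$ for all $f$ and all $[w]\in\mathbb{CP}^n$.
   Context: $\mathscr{P}^{k,k}(\mathbb{C}^{1+n})$ is the span of $z^K\overline{z}^L$ with $|K|=|L|=k$. Wick product: $f\star_\hbar g=\sum_K\frac{\hbar^{|K|}}{K!}\frac{\partial^{|K|}f}{\partial\overline{z}^K}\frac{\partial^{|K|}g}{\partial z^K}$, involution complex conjugation. $\mathcal{J}=\sum_jz_j\overline{z_j}$. For $f\in\bigoplus_k\mathscr{P}^{k,k}$, $\Psi_0(f):\mathbb{CP}^n\to\mathbb{C}$, $[w]\mapsto f(w)$ for any representative $w$ with $\mathcal{J}(w)=1$; $\mathscr{P}(\mathbb{CP}^n)$ is the image of $\Psi_0$. For $\hbar\ne0$, $\Psi_\hbar(f)=\sum_k\hbar^k(1/\hbar)_{\downarrow,k}\Psi_0(f_k)$ where $f_k\in\mathscr{P}^{k,k}$ are the homogeneous components of $f$ and $(x)_{\downarrow,k}=\prod_{j=0}^{k-1}(x-j)$.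 *)

theory Defs
  imports "HOL-Analysis.Analysis" "HOL-Library.Poly_Mapping"
begin

text \<open>Polynomials in z_0..z_n and their conjugates, represented by coefficients.
A monomial z^K zbar^L is encoded by the pair of exponent vectors (K, L),
exponent vectors being functions nat => nat (index i for variable z_i).\<close>

type_synonym mono = "(nat \<Rightarrow> nat) \<times> (nat \<Rightarrow> nat)"
type_synonym cpoly = "mono \<Rightarrow>\<^sub>0 complex"

definition msize :: "nat \<Rightarrow> (nat \<Rightarrow> nat) \<Rightarrow> nat" where
  "msize n K = (\<Sum>i\<le>n. K i)"

definition mfact :: "nat \<Rightarrow> (nat \<Rightarrow> nat) \<Rightarrow> nat" where
  "mfact n K = (\<Prod>i\<le>n. fact (K i))"

definition midx :: "nat \<Rightarrow> (nat \<Rightarrow> nat) set" where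
  "midx n = {K. \<forall>i>n. K i = 0}"

text \<open>The space of bihomogeneous sums, i.e. the direct sum over k of P^{k,k}(C^{1+n}).\<close>
definition Pkk :: "nat \<Rightarrow> cpoly set" where
  "Pkk n = {f. \<forall>(K, L) \<in> Poly_Mapping.keys f. K \<in> midx n \<and> L \<in> midx n \<and> msize n K = msize n L}"

definition smul :: "complex \<Rightarrow> cpoly \<Rightarrow> cpoly" where
  "smul c f = Poly_Mapping.map ((*) c) f"

text \<open>d^M/dzbar^M zbar^L = (prod_i L_i!/(L_i-M_i)!) zbar^(L-M) for M <= L.\<close>
definition dfact :: "nat \<Rightarrow> (nat \<Rightarrow> nat) \<Rightarrow> (nat \<Rightarrow> nat) \<Rightarrow> complex" where
  "dfact n L M = (\<Prod>i\<le>n. of_nat (fact (L i)) / of_nat (fact (L i - M i)))"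

definition wick_mono :: "nat \<Rightarrow> real \<Rightarrow> complex \<Rightarrow> mono \<Rightarrow> mono \<Rightarrow> cpoly" where
  "wick_mono n h c a b =
     (case a of (K1, L1) \<Rightarrow> case b of (K2, L2) \<Rightarrow>
       (\<Sum>M \<in> {M \<in> midx n. (\<forall>i. M i \<le> L1 i) \<and> (\<forall>i. M i \<le> K2 i)}.
          Poly_Mapping.single (\<lambda>i. K1 i + K2 i - M i, \<lambda>i. L1 i - M i + L2 i)
            (c * complex_of_real (h ^ msize n M) / of_nat (mfact n M)
               * dfact n L1 M * dfact n K2 M)))"

text \<open>Wick star product f *_h g = sum_K h^|K|/K! (d^K f/dzbar^K)(d^K g/dz^K), extended bilinearly.\<close>
definition wick :: "nat \<Rightarrow> real \<Rightarrow> cpoly \<Rightarrow> cpoly \<Rightarrow> cpoly" where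
  "wick n h f g = (\<Sum>a\<in>Poly_Mapping.keys f. \<Sum>b\<in>Poly_Mapping.keys g.
                      wick_mono n h (Poly_Mapping.lookup f a * Poly_Mapping.lookup g b) a b)"

text \<open>Complex conjugation of the polynomial function: conj(c z^K zbar^L) = conj(c) z^L zbar^K.\<close>
definition pconj :: "cpoly \<Rightarrow> cpoly" where
  "pconj f = (\<Sum>(K, L)\<in>Poly_Mapping.keys f.
                 Poly_Mapping.single (L, K) (cnj (Poly_Mapping.lookup f (K, L))))"

definition eval :: "nat \<Rightarrow> cpoly \<Rightarrow> (nat \<Rightarrow> complex) \<Rightarrow> complex" where
  "eval n f w = (\<Sum>(K, L)\<in>Poly_Mapping.keys f.
                   Poly_Mapping.lookup f (K, L) * (\<Prod>i\<le>n. w i ^ K i * cnj (w i) ^ L i))"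

definition Jpoly :: "nat \<Rightarrow> cpoly" where
  "Jpoly n = (\<Sum>j\<le>n. Poly_Mapping.single ((\<lambda>i. if i = j then 1 else 0), (\<lambda>i. if i = j then 1 else 0)) 1)"

definition onep :: cpoly where
  "onep = Poly_Mapping.single ((\<lambda>_. 0), (\<lambda>_. 0)) 1"

definition Jval :: "nat \<Rightarrow> (nat \<Rightarrow> complex) \<Rightarrow> real" where
  "Jval n w = (\<Sum>j\<le>n. (cmod (w j))\<^sup>2)"

text \<open>C^{1+n} and CP^n (points = complex lines through 0 minus the origin).\<close>
definition Cvec :: "nat \<Rightarrow> (nat \<Rightarrow> complex) set" where
  "Cvec n = {w. \<forall>i>n. w i = 0}"

definition cline :: "(nat \<Rightarrow> complex) \<Rightarrow> (nat \<Rightarrow> complex) set" where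
  "cline w = {(\<lambda>i. c * w i) | c. c \<noteq> 0}"

definition CP :: "nat \<Rightarrow> (nat \<Rightarrow> complex) set set" where
  "CP n = {cline w | w. w \<in> Cvec n \<and> w \<noteq> (\<lambda>_. 0)}"

definition hcomp :: "nat \<Rightarrow> nat \<Rightarrow> cpoly \<Rightarrow> cpoly" where
  "hcomp n k f = (\<Sum>(K, L)\<in>{(K, L) \<in> Poly_Mapping.keys f. msize n K = k}.
                    Poly_Mapping.single (K, L) (Poly_Mapping.lookup f (K, L)))"

definition Psi0 :: "nat \<Rightarrow> cpoly \<Rightarrow> (nat \<Rightarrow> complex) set \<Rightarrow> complex" where
  "Psi0 n f p = (if p \<in> CP n then eval n f (SOME w. w \<in> p \<and> Jval n w = 1) else 0)"

definition ffact :: "real \<Rightarrow> nat \<Rightarrow> real" where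
  "ffact x k = (\<Prod>j<k. x - real j)"

definition Psi :: "nat \<Rightarrow> real \<Rightarrow> cpoly \<Rightarrow> (nat \<Rightarrow> complex) set \<Rightarrow> complex" where
  "Psi n h f p = (\<Sum>k\<in>(\<lambda>(K, L). msize n K) ` Poly_Mapping.keys f.
                    complex_of_real (h ^ k * ffact (1 / h) k) * Psi0 n (hcomp n k f) p)"

definition star_ideal :: "nat \<Rightarrow> real \<Rightarrow> cpoly set \<Rightarrow> bool" where
  "star_ideal n h I \<longleftrightarrow> I \<subseteq> Pkk n \<and> 0 \<in> I
     \<and> (\<forall>x\<in>I. \<forall>y\<in>I. x + y \<in> I)
     \<and> (\<forall>c. \<forall>x\<in>I. smul c x \<in> I)
     \<and> (\<forall>a\<in>Pkk n. \<forall>x\<in>I. wick n h a x \<in> I \<and> wick n h x a \<in> I)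
     \<and> (\<forall>x\<in>I. pconj x \<in> I)"

definition gen_star_ideal :: "nat \<Rightarrow> real \<Rightarrow> cpoly set \<Rightarrow> cpoly set" where
  "gen_star_ideal n h S = \<Inter>{I. star_ideal n h I \<and> S \<subseteq> I}"

end

theory Submission
  imports Defs "HOL-Analysis.Analysis"
begin


definition lin :: "('a \<Rightarrow> 'b::zero \<Rightarrow> 'c::comm_monoid_add) \<Rightarrow> ('a \<Rightarrow>\<^sub>0 'b) \<Rightarrow> 'c" where
  "lin F f = (\<Sum>x\<in>Poly_Mapping.keys f. F x (Poly_Mapping.lookup f x))"

lemma lin_superset:
  assumes "finite S" "Poly_Mapping.keys f \<subseteq> S" "\<And>x. F x 0 = 0"
  shows "lin F f = (\<Sum>x\<in>S. F x (Poly_Mapping.lookup f x))"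
  unfolding lin_def
  by (rule sum.mono_neutral_left) (use assms in \<open>auto simp: in_keys_iff\<close>)

lemma lin_zero [simp]: "lin F 0 = 0"
  by (simp add: lin_def)

lemma lin_add:
  fixes F :: "'a \<Rightarrow> 'b::monoid_add \<Rightarrow> 'c::comm_monoid_add"
  assumes "\<And>x a b. F x (a + b) = F x a + F x b" "\<And>x. F x 0 = 0"
  shows "lin F (f + g) = lin F f + lin F g"
proof -
  let ?S = "Poly_Mapping.keys f \<union> Poly_Mapping.keys g"
  have "lin F (f + g) = (\<Sum>x\<in>?S. F x (Poly_Mapping.lookup (f + g) x))"
    by (rule lin_superset) (auto simp: keys_add assms)
  also have "\<dots> = (\<Sum>x\<in>?S. F x (Poly_Mapping.lookup f x)) + (\<Sum>x\<in>?S. F x (Poly_Mapping.lookup g x))"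
    by (simp add: lookup_add assms sum.distrib)
  also have "\<dots> = lin F f + lin F g"
    by (subst (1 2) lin_superset[where S="?S"]) (auto simp: assms)
  finally show ?thesis .
qed

lemma lin_single:
  assumes "F x 0 = 0"
  shows "lin F (Poly_Mapping.single x c) = F x c"
  using assms by (cases "c = 0") (auto simp: lin_def)

lemma lin_sum:
  fixes F :: "'a \<Rightarrow> 'b::comm_monoid_add \<Rightarrow> 'c::comm_monoid_add"
  assumes "\<And>x a b. F x (a + b) = F x a + F x b" "\<And>x. F x 0 = 0"
  shows "lin F (\<Sum>i\<in>I. g i) = (\<Sum>i\<in>I. lin F (g i))"
proof (cases "finite I")
  case True
  then show ?thesis
    by (induction I rule: finite_induct) (auto simp: lin_add[OF assms])
qed simp

lemma lin_diff:
  fixes F :: "'a \<Rightarrow> 'b::ab_group_add \<Rightarrow> 'c::ab_group_add"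
  assumes "\<And>x a b. F x (a + b) = F x a + F x b" "\<And>x. F x 0 = 0"
  shows "lin F (f - g) = lin F f - lin F g"
proof -
  have "lin F f = lin F ((f - g) + g)" by simp
  also have "\<dots> = lin F (f - g) + lin F g" by (rule lin_add[OF assms])
  finally show ?thesis by simp
qed

lemma lin_plus_fun:
  "lin (\<lambda>x c. F x c + G x c) f = lin F f + lin G f"
  by (simp add: lin_def sum.distrib)

lemma lin_cong:
  assumes "\<And>x. x \<in> Poly_Mapping.keys f \<Longrightarrow> F x (Poly_Mapping.lookup f x) = G x (Poly_Mapping.lookup f x)"
  shows "lin F f = lin G f"
  using assms unfolding lin_def by (rule sum.cong[OF refl])

lemma lin_sum_fun:
  "lin (\<lambda>x c. \<Sum>i\<in>I. F i x c) f = (\<Sum>i\<in>I. lin (F i) f)"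
  unfolding lin_def by (rule sum.swap)

lemma single_sum:
  "Poly_Mapping.single x (\<Sum>i\<in>I. v i) = (\<Sum>i\<in>I. Poly_Mapping.single x (v i))"
  by (induction I rule: infinite_finite_induct) (auto simp: single_add)

lemma lin_single_expand:
  "lin Poly_Mapping.single f = f"
  by (rule poly_mapping_eqI)
     (auto simp: lin_def lookup_sum lookup_single when_def in_keys_iff
           intro: sum.neutral sum.delta' trans[OF sum.delta'] split: if_splits)


lemma wm_add: "wick_mono n h (c + d) a b = wick_mono n h c a b + wick_mono n h d a b"
  unfolding wick_mono_def
  by (cases a; cases b) (simp add: sum.distrib[symmetric] single_add[symmetric] distrib_right add_divide_distrib)

lemma wm_zero [simp]: "wick_mono n h 0 a b = 0"
  unfolding wick_mono_def by (cases a; cases b) simp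

lemma wick_lin: "wick n h f g = lin (\<lambda>a c. lin (\<lambda>b d. wick_mono n h (c * d) a b) g) f"
  unfolding wick_def lin_def ..

lemma wick_add_right: "wick n h f (g1 + g2) = wick n h f g1 + wick n h f g2"
  unfolding wick_lin
  by (subst lin_add, simp_all add: distrib_left wm_add lin_plus_fun[symmetric])

lemma wick_add_left: "wick n h (f1 + f2) g = wick n h f1 g + wick n h f2 g"
  unfolding wick_lin
  by (rule lin_add) (simp_all add: distrib_right wm_add lin_plus_fun lin_def)

lemma wick_zero_left [simp]: "wick n h 0 g = 0"
  by (simp add: wick_def)

lemma wick_zero_right [simp]: "wick n h f 0 = 0"
  by (simp add: wick_def)

lemma wick_sum_right: "wick n h f (\<Sum>i\<in>I. g i) = (\<Sum>i\<in>I. wick n h f (g i))"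
  by (induction I rule: infinite_finite_induct) (auto simp: wick_add_right)

lemma wick_sum_left: "wick n h (\<Sum>i\<in>I. f i) g = (\<Sum>i\<in>I. wick n h (f i) g)"
  by (induction I rule: infinite_finite_induct) (auto simp: wick_add_left)

lemma wick_diff_right: "wick n h f (g1 - g2) = wick n h f g1 - wick n h f g2"
  by (metis add_diff_cancel eq_diff_eq wick_add_right)

lemma wick_diff_left: "wick n h (f1 - f2) g = wick n h f1 g - wick n h f2 g"
  by (metis add_diff_cancel eq_diff_eq wick_add_left)

lemma wick_single_right:
  "wick n h f (Poly_Mapping.single y e) = lin (\<lambda>a c. wick_mono n h (c * e) a y) f"
  unfolding wick_lin by (rule lin_cong) (simp add: lin_single)

lemma wick_single_left:
  "wick n h (Poly_Mapping.single x c) g = lin (\<lambda>b d. wick_mono n h (c * d) x b) g"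
  unfolding wick_lin by (subst lin_single) (simp_all add: lin_def)

lemma wick_single_single:
  "wick n h (Poly_Mapping.single x c) (Poly_Mapping.single y d) = wick_mono n h (c * d) x y"
  by (simp add: wick_single_left lin_single)


definition ej :: "nat \<Rightarrow> nat \<Rightarrow> nat" where "ej j = (\<lambda>i. if i = j then 1 else 0)"

definition sh :: "nat \<Rightarrow> mono \<Rightarrow> mono" where
  "sh j x = ((\<lambda>i. fst x i + ej j i), (\<lambda>i. snd x i + ej j i))"

definition Phi :: "nat \<Rightarrow> real \<Rightarrow> mono \<Rightarrow> complex \<Rightarrow> cpoly" where
  "Phi n h x c = (\<Sum>j\<le>n. Poly_Mapping.single (sh j x) c)
      + Poly_Mapping.single x (c * (complex_of_real h * of_nat (msize n (snd x)) - 1))"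

lemma zero_midx [simp]: "(\<lambda>_. 0) \<in> midx n"
  by (simp add: midx_def)

lemma ej_midx [simp]: "j \<le> n \<Longrightarrow> ej j \<in> midx n"
  by (simp add: midx_def ej_def)

lemma msize_zero [simp]: "msize n (\<lambda>_. 0) = 0" by (simp add: msize_def)
lemma mfact_zero [simp]: "mfact n (\<lambda>_. 0) = 1" by (simp add: mfact_def)
lemma dfact_zero [simp]: "dfact n L (\<lambda>_. 0) = 1" by (simp add: dfact_def)

lemma msize_ej [simp]: "j \<le> n \<Longrightarrow> msize n (ej j) = 1"
  by (simp add: msize_def ej_def)
lemma mfact_ej [simp]: "mfact n (ej j) = 1"
  unfolding mfact_def by (rule prod.neutral) (simp add: ej_def)

lemma prod_if_delta: "j \<le> (n::nat) \<Longrightarrow> (\<Prod>i\<le>n. if i = j then a else 1) = (a::'a::comm_monoid_mult)"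
  using prod.delta[OF finite_atMost[of n], of j "\<lambda>_. a"] by simp

lemma dfact_ej: assumes "j \<le> n" "1 \<le> L j" shows "dfact n L (ej j) = of_nat (L j)"
proof -
  have "dfact n L (ej j) = (\<Prod>i\<le>n. if i = j then of_nat (fact (L j)) / of_nat (fact (L j - 1)) else (1::complex))"
    unfolding dfact_def by (rule prod.cong) (auto simp: ej_def)
  also have "\<dots> = of_nat (fact (L j)) / of_nat (fact (L j - 1))"
    using assms(1) by (rule prod_if_delta)
  also have "\<dots> = of_nat (L j)"
  proof -
    obtain m where m: "L j = Suc m" using assms(2) by (cases "L j") auto
    have "of_nat (fact (Suc m)) = of_nat (Suc m) * (of_nat (fact m) :: complex)"
      by (simp only: fact_Suc of_nat_mult of_nat_id)
    then show ?thesis by (simp add: m)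
  qed
  finally show ?thesis .
qed

lemma dfact_ej_ej: "j \<le> n \<Longrightarrow> dfact n (ej j) (ej j) = 1"
  by (subst dfact_ej) (auto simp: ej_def)

lemma wm_00: "wick_mono n h c x ((\<lambda>_. 0), (\<lambda>_. 0)) = Poly_Mapping.single x c"
proof -
  obtain K L where x: "x = (K, L)" by force
  have S: "{M \<in> midx n. (\<forall>i. M i \<le> L i) \<and> (\<forall>i. M i \<le> (0::nat))} = {\<lambda>_. 0}"
    by auto
  show ?thesis by (simp only: wick_mono_def x prod.case S) simp
qed

lemma wm_ej:
  assumes "j \<le> n"
  shows "wick_mono n h c x (ej j, ej j) = Poly_Mapping.single (sh j x) c
          + Poly_Mapping.single x (c * complex_of_real h * of_nat (snd x j))"
proof -
  obtain K L where x: "x = (K, L)" by force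
  have le: "(\<forall>i. M i \<le> ej j i) \<longleftrightarrow> M = (\<lambda>_. 0) \<or> M = ej j" for M :: "nat \<Rightarrow> nat"
  proof
    assume "\<forall>i. M i \<le> ej j i"
    note H = this
    have "\<forall>i. i \<noteq> j \<longrightarrow> M i = 0"
    proof (intro allI impI)
      fix i assume "i \<noteq> j" then show "M i = 0" using spec[OF H, of i] by (simp add: ej_def)
    qed
    moreover have "M j \<le> 1" using spec[OF H, of j] by (simp add: ej_def)
    ultimately show "M = (\<lambda>_. 0) \<or> M = ej j"
      by (cases "M j") (auto simp: ej_def fun_eq_iff, metis)
  qed (auto simp: ej_def)
  have ne: "(\<lambda>_. 0::nat) \<noteq> ej j" by (auto simp: ej_def fun_eq_iff)
  show ?thesis
  proof (cases "1 \<le> L j")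
    case True
    have S: "{M \<in> midx n. (\<forall>i. M i \<le> L i) \<and> (\<forall>i. M i \<le> ej j i)} = {\<lambda>_. 0, ej j}"
    proof -
      have "\<forall>i. ej j i \<le> L i" using True by (simp add: ej_def)
      then show ?thesis using True assms by (auto simp only: le) auto
    qed
    have k: "(\<lambda>i. K i + ej j i - ej j i, \<lambda>i. L i - ej j i + ej j i) = (K, L)"
      using True by (auto simp: ej_def fun_eq_iff)
    show ?thesis unfolding wick_mono_def x
      using assms True ne
      by (simp add: S k dfact_ej dfact_ej_ej sh_def)
  next
    case False
    have S: "{M \<in> midx n. (\<forall>i. M i \<le> L i) \<and> (\<forall>i. M i \<le> ej j i)} = {\<lambda>_. 0}"
      using False assms by (auto simp only: le) (auto simp: ej_def dest: spec[of _ j])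
    show ?thesis unfolding wick_mono_def x
      using False by (simp add: S sh_def not_less_eq_eq)
  qed
qed

lemma Jpoly_ej: "Jpoly n = (\<Sum>j\<le>n. Poly_Mapping.single (ej j, ej j) 1)"
  unfolding Jpoly_def ej_def ..

lemma lin_minus_fun:
  fixes F :: "'a \<Rightarrow> 'b::zero \<Rightarrow> 'c::ab_group_add"
  shows "lin (\<lambda>x c. F x c - G x c) f = lin F f - lin G f"
  by (simp add: lin_def sum_subtractf)

lemma WJ: "wick n h g (Jpoly n - onep) = lin (Phi n h) g"
proof -
  have "wick n h g (Jpoly n - onep)
     = (\<Sum>j\<le>n. lin (\<lambda>a c. wick_mono n h c a (ej j, ej j)) g) - lin (\<lambda>a c. wick_mono n h c a ((\<lambda>_. 0), (\<lambda>_. 0))) g"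
    unfolding Jpoly_ej onep_def
    by (simp add: wick_diff_right wick_sum_right wick_single_right)
  also have "\<dots> = (\<Sum>j\<le>n. lin (\<lambda>a c. Poly_Mapping.single (sh j a) c
          + Poly_Mapping.single a (c * complex_of_real h * of_nat (snd a j))) g) - lin Poly_Mapping.single g"
    by (simp add: wm_00 wm_ej)
  also have "\<dots> = lin (\<lambda>a c. (\<Sum>j\<le>n. Poly_Mapping.single (sh j a) c
          + Poly_Mapping.single a (c * complex_of_real h * of_nat (snd a j))) - Poly_Mapping.single a c) g"
    by (simp add: lin_minus_fun lin_sum_fun)
  also have "\<dots> = lin (Phi n h) g"
  proof (rule lin_cong)
    fix a
    let ?c = "Poly_Mapping.lookup g a"
    have "(\<Sum>j\<le>n. Poly_Mapping.single (sh j a) ?c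
          + Poly_Mapping.single a (?c * complex_of_real h * of_nat (snd a j))) - Poly_Mapping.single a ?c
        = (\<Sum>j\<le>n. Poly_Mapping.single (sh j a) ?c)
          + Poly_Mapping.single a ((\<Sum>j\<le>n. ?c * complex_of_real h * of_nat (snd a j)) - ?c)"
      by (simp add: sum.distrib single_sum single_diff)
    also have "(\<Sum>j\<le>n. ?c * complex_of_real h * of_nat (snd a j)) - ?c
        = ?c * (complex_of_real h * of_nat (msize n (snd a)) - 1)"
      by (simp add: msize_def sum_distrib_left algebra_simps)
    finally show "(\<Sum>j\<le>n. Poly_Mapping.single (sh j a) ?c
          + Poly_Mapping.single a (?c * complex_of_real h * of_nat (snd a j))) - Poly_Mapping.single a ?c
        = Phi n h a ?c" by (simp add: Phi_def)
  qed
  finally show ?thesis .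
qed


definition mmono :: "nat \<Rightarrow> mono \<Rightarrow> (nat \<Rightarrow> complex) \<Rightarrow> complex" where
  "mmono n x w = (\<Prod>i\<le>n. w i ^ fst x i * cnj (w i) ^ snd x i)"

definition evalw :: "nat \<Rightarrow> (nat \<Rightarrow> real) \<Rightarrow> cpoly \<Rightarrow> (nat \<Rightarrow> complex) \<Rightarrow> complex" where
  "evalw n r f w = lin (\<lambda>x c. complex_of_real (r (msize n (fst x))) * c * mmono n x w) f"

definition pt :: "nat \<Rightarrow> (nat \<Rightarrow> complex) set \<Rightarrow> (nat \<Rightarrow> complex)" where
  "pt n p = (SOME w. w \<in> p \<and> Jval n w = 1)"

definition rho :: "real \<Rightarrow> nat \<Rightarrow> real" where
  "rho h k = h ^ k * ffact (1 / h) k"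

definition sc :: "(mono \<Rightarrow> complex) \<Rightarrow> cpoly \<Rightarrow> cpoly" where
  "sc g f = Poly_Mapping.mapp (\<lambda>x c. g x * c) f"

definition bal :: "nat \<Rightarrow> mono \<Rightarrow> bool" where
  "bal n x \<longleftrightarrow> fst x \<in> midx n \<and> snd x \<in> midx n \<and> msize n (fst x) = msize n (snd x)"

lemma Pkk_iff: "f \<in> Pkk n \<longleftrightarrow> (\<forall>x\<in>Poly_Mapping.keys f. bal n x)"
  by (auto simp: Pkk_def bal_def split_def)

lemma evalw_add: "evalw n r (f + g) w = evalw n r f w + evalw n r g w"
  unfolding evalw_def by (rule lin_add) (auto simp: algebra_simps)

lemma evalw_zero [simp]: "evalw n r 0 w = 0"
  by (simp add: evalw_def)

lemma evalw_diff: "evalw n r (f - g) w = evalw n r f w - evalw n r g w"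
  unfolding evalw_def by (rule lin_diff) (auto simp: algebra_simps)

lemma evalw_sum: "evalw n r (\<Sum>i\<in>I. f i) w = (\<Sum>i\<in>I. evalw n r (f i) w)"
  unfolding evalw_def by (rule lin_sum) (auto simp: algebra_simps)

lemma evalw_single: "evalw n r (Poly_Mapping.single x c) w = complex_of_real (r (msize n (fst x))) * c * mmono n x w"
  unfolding evalw_def by (rule lin_single) simp

lemma eval_evalw: "eval n f w = evalw n (\<lambda>_. 1) f w"
  by (simp add: eval_def evalw_def lin_def mmono_def split_def)

lemma Psi0_eq: "Psi0 n f p = (if p \<in> CP n then evalw n (\<lambda>_. 1) f (pt n p) else 0)"
  by (simp add: Psi0_def pt_def eval_evalw)

lemma hcomp_eq: "hcomp n k f = (\<Sum>x\<in>{x\<in>Poly_Mapping.keys f. msize n (fst x) = k}. Poly_Mapping.single x (Poly_Mapping.lookup f x))"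
  by (simp add: hcomp_def split_def)

lemma Psi_eq: "Psi n h f p = (if p \<in> CP n then evalw n (rho h) f (pt n p) else 0)"
proof (cases "p \<in> CP n")
  case True
  let ?S = "Poly_Mapping.keys f"
  let ?g = "\<lambda>x. msize n (fst x)"
  let ?H = "\<lambda>x. complex_of_real (rho h (?g x)) * Poly_Mapping.lookup f x * mmono n x (pt n p)"
  have "Psi n h f p = (\<Sum>k\<in>?g ` ?S. complex_of_real (rho h k) * evalw n (\<lambda>_. 1) (hcomp n k f) (pt n p))"
    unfolding Psi_def Psi0_eq using True by (simp add: split_def rho_def)
  also have "\<dots> = (\<Sum>k\<in>?g ` ?S. (\<Sum>x\<in>{x\<in>?S. ?g x = k}. ?H x))"
    unfolding hcomp_eq evalw_sum evalw_single
    by (rule sum.cong[OF refl]) (auto simp: sum_distrib_left intro!: sum.cong)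
  also have "\<dots> = (\<Sum>x\<in>?S. ?H x)"
    by (rule sum.group) auto
  also have "\<dots> = evalw n (rho h) f (pt n p)"
    by (simp add: evalw_def lin_def)
  finally show ?thesis using True by simp
qed (simp add: Psi_def Psi0_def)

lemma mono_swap: "mmono n (snd x, fst x) w = cnj (mmono n x w)"
  by (simp add: mmono_def mult.commute)

lemma evalw_pconj:
  assumes "f \<in> Pkk n"
  shows "evalw n r (pconj f) w = cnj (evalw n r f w)"
proof -
  have "pconj f = (\<Sum>x\<in>Poly_Mapping.keys f. Poly_Mapping.single (snd x, fst x) (cnj (Poly_Mapping.lookup f x)))"
    by (simp add: pconj_def split_def)
  then have "evalw n r (pconj f) w = (\<Sum>x\<in>Poly_Mapping.keys f.
      complex_of_real (r (msize n (snd x))) * cnj (Poly_Mapping.lookup f x) * cnj (mmono n x w))"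
    by (simp add: evalw_sum evalw_single mono_swap)
  also have "\<dots> = (\<Sum>x\<in>Poly_Mapping.keys f.
      complex_of_real (r (msize n (fst x))) * cnj (Poly_Mapping.lookup f x) * cnj (mmono n x w))"
    using assms by (intro sum.cong) (auto simp: Pkk_iff bal_def)
  also have "\<dots> = cnj (evalw n r f w)"
    by (simp add: evalw_def lin_def)
  finally show ?thesis .
qed

lemma lookup_sc: "Poly_Mapping.lookup (sc g f) x = g x * Poly_Mapping.lookup f x"
  by (auto simp: sc_def lookup_mapp when_def in_keys_iff)

lemma keys_sc: "Poly_Mapping.keys (sc g f) \<subseteq> Poly_Mapping.keys f"
  unfolding sc_def by (rule keys_mapp_subset)

lemma sc_Pkk: "f \<in> Pkk n \<Longrightarrow> sc g f \<in> Pkk n"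
  using keys_sc by (auto simp: Pkk_iff)

lemma evalw_sc: "evalw n r (sc g f) w = lin (\<lambda>x c. complex_of_real (r (msize n (fst x))) * (g x * c) * mmono n x w) f"
  unfolding evalw_def
  by (subst (1 2) lin_superset[where S="Poly_Mapping.keys f"]) (auto simp: keys_sc lookup_sc)

lemma rho_Suc: "h \<noteq> 0 \<Longrightarrow> rho h (Suc k) = rho h k * (1 - real k * h)"
  by (simp add: rho_def ffact_def field_simps)

lemma rho_nonzero:
  assumes "h \<noteq> 0" "\<forall>k::nat. k \<ge> 1 \<longrightarrow> h \<noteq> 1 / real k"
  shows "rho h k \<noteq> 0"
proof (induction k)
  case 0 then show ?case by (simp add: rho_def ffact_def)
next
  case (Suc k)
  have "1 - real k * h \<noteq> 0"
  proof
    assume "1 - real k * h = 0"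
    then have "k \<ge> 1" "h = 1 / real k" by (cases k; auto simp: field_simps)+
    with assms show False by auto
  qed
  with Suc assms(1) show ?case by (simp add: rho_Suc)
qed

lemma part1:
  assumes "h \<noteq> 0" "\<forall>k::nat. k \<ge> 1 \<longrightarrow> h \<noteq> 1 / real k"
  shows "Psi n h ` Pkk n = Psi0 n ` Pkk n"
proof
  show "Psi n h ` Pkk n \<subseteq> Psi0 n ` Pkk n"
  proof
    fix F assume "F \<in> Psi n h ` Pkk n"
    then obtain f where f: "f \<in> Pkk n" "F = Psi n h f" by auto
    let ?g = "sc (\<lambda>x. complex_of_real (rho h (msize n (fst x)))) f"
    have "Psi n h f = Psi0 n ?g"
      by (rule ext) (simp add: Psi_eq Psi0_eq evalw_sc, simp add: evalw_def algebra_simps)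
    then show "F \<in> Psi0 n ` Pkk n" using f sc_Pkk by blast
  qed
next
  show "Psi0 n ` Pkk n \<subseteq> Psi n h ` Pkk n"
  proof
    fix F assume "F \<in> Psi0 n ` Pkk n"
    then obtain f where f: "f \<in> Pkk n" "F = Psi0 n f" by auto
    let ?g = "sc (\<lambda>x. 1 / complex_of_real (rho h (msize n (fst x)))) f"
    have "Psi0 n f = Psi n h ?g"
      using rho_nonzero[OF assms]
      by (intro ext) (simp add: Psi_eq Psi0_eq evalw_sc, simp add: evalw_def algebra_simps)
    then show "F \<in> Psi n h ` Pkk n" using f sc_Pkk by blast
  qed
qed

lemma part3:
  "f \<in> Pkk n \<Longrightarrow> p \<in> CP n \<Longrightarrow> Psi n h (pconj f) p = cnj (Psi n h f p)"
  by (simp add: Psi_eq evalw_pconj)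

lemma sum_ej: "j \<le> n \<Longrightarrow> sum (ej j) {..n} = 1"
  using msize_ej[of j n] by (simp add: msize_def)

lemma msize_sh: "j \<le> n \<Longrightarrow> msize n (fst (sh j x)) = msize n (fst x) + 1"
  by (simp add: msize_def sh_def sum.distrib sum_ej)

lemma msize_sh2: "j \<le> n \<Longrightarrow> msize n (snd (sh j x)) = msize n (snd x) + 1"
  by (simp add: msize_def sh_def sum.distrib sum_ej)

lemma mono_sh: "j \<le> n \<Longrightarrow> mmono n (sh j x) w = mmono n x w * (w j * cnj (w j))"
proof -
  assume j: "j \<le> n"
  have "mmono n (sh j x) w = mmono n x w * (\<Prod>i\<le>n. w i ^ ej j i * cnj (w i) ^ ej j i)"
    by (simp add: mmono_def sh_def power_add prod.distrib[symmetric] algebra_simps)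
  also have "(\<Prod>i\<le>n. w i ^ ej j i * cnj (w i) ^ ej j i) = (\<Prod>i\<le>n. if i = j then w j * cnj (w j) else 1)"
    by (rule prod.cong) (auto simp: ej_def)
  also have "\<dots> = w j * cnj (w j)" using j by (rule prod_if_delta)
  finally show ?thesis .
qed

lemma sum_Jval: "(\<Sum>j\<le>n. w j * cnj (w j)) = complex_of_real (Jval n w)"
  unfolding Jval_def of_real_sum by (rule sum.cong[OF refl]) (rule complex_norm_square[symmetric])

lemma evalw_Phi:
  assumes h: "h \<noteq> 0" and J: "Jval n w = 1" and b: "bal n x"
  shows "evalw n (rho h) (Phi n h x c) w = 0"
proof -
  let ?k = "msize n (fst x)"
  have "evalw n (rho h) (Phi n h x c) w
     = (\<Sum>j\<le>n. complex_of_real (rho h (?k + 1)) * c * (mmono n x w * (w j * cnj (w j))))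
       + complex_of_real (rho h ?k) * (c * (complex_of_real h * of_nat (msize n (snd x)) - 1)) * mmono n x w"
    unfolding Phi_def evalw_add evalw_sum evalw_single
    by (intro arg_cong2[where f="(+)"] sum.cong refl) (simp_all add: msize_sh mono_sh)
  also have "\<dots> = complex_of_real (rho h (?k + 1)) * c * mmono n x w
       + complex_of_real (rho h ?k) * (c * (complex_of_real h * of_nat ?k - 1)) * mmono n x w"
    using b J by (simp add: sum_distrib_left[symmetric] sum_Jval bal_def)
  also have "\<dots> = 0"
    using h by (simp add: rho_Suc algebra_simps)
  finally show ?thesis .
qed

lemma evalw_lin_Phi:
  assumes h: "h \<noteq> 0" and J: "Jval n w = 1" and f: "f \<in> Pkk n"
  shows "evalw n (rho h) (lin (Phi n h) f) w = 0"
  using f by (simp add: lin_def evalw_sum evalw_Phi[OF h J] Pkk_iff)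


definition FF :: "nat \<Rightarrow> (nat \<Rightarrow> nat) \<Rightarrow> (nat \<Rightarrow> nat) \<Rightarrow> real" where
  "FF n L M = (\<Prod>i\<le>n. ffact (real (L i)) (M i))"

definition DD :: "nat \<Rightarrow> (nat \<Rightarrow> nat) \<Rightarrow> (nat \<Rightarrow> nat) set" where
  "DD n L = {M \<in> midx n. \<forall>i. M i \<le> L i}"

definition Cf :: "nat \<Rightarrow> real \<Rightarrow> (nat \<Rightarrow> nat) \<Rightarrow> (nat \<Rightarrow> nat) \<Rightarrow> (nat \<Rightarrow> nat) \<Rightarrow> complex" where
  "Cf n h L K M = complex_of_real (h ^ msize n M / real (mfact n M) * FF n L M * FF n K M)"

definition XX :: "mono \<Rightarrow> mono \<Rightarrow> (nat \<Rightarrow> nat) \<Rightarrow> mono" where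
  "XX a b M = ((\<lambda>i. fst a i + fst b i - M i), (\<lambda>i. snd a i - M i + snd b i))"

lemma ffact_Suc: "ffact x (Suc m) = ffact x m * (x - real m)"
  by (simp add: ffact_def)

lemma ffact_0 [simp]: "ffact x 0 = 1"
  by (simp add: ffact_def)

lemma ffact_shift: "ffact (x + 1) (Suc m) = (x + 1) * ffact x m"
  by (induction m) (simp_all add: ffact_Suc algebra_simps)

lemma ffact_pascal: "ffact (x + 1) m = ffact x m + (if 1 \<le> m then real m * ffact x (m - 1) else 0)"
proof (cases m)
  case (Suc k)
  have 1: "ffact (x + 1) (Suc k) = (x+1) * ffact x k" by (rule ffact_shift)
  have 2: "ffact x (Suc k) = ffact x k * (x - real k)" by (rule ffact_Suc)
  show ?thesis unfolding Suc 1 2 by (simp add: algebra_simps)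
qed simp

lemma ffact_nat_zero: "k < m \<Longrightarrow> ffact (real k) m = 0"
  unfolding ffact_def by (rule prod_zero) auto

lemma ffact_nat: "m \<le> k \<Longrightarrow> ffact (real k) m = fact k / fact (k - m)"
proof (induction m)
  case (Suc m)
  then have "k - m = Suc (k - Suc m)" by simp
  then have "(fact (k - m) :: real) = real (k - m) * fact (k - Suc m)"
    by (simp del: of_nat_Suc add: fact_Suc)
  with Suc show ?case by (simp add: ffact_Suc of_nat_diff field_simps)
qed simp

lemma dfact_FF: "(\<forall>i. M i \<le> L i) \<Longrightarrow> dfact n L M = complex_of_real (FF n L M)"
  by (simp add: dfact_def FF_def ffact_nat)

lemma FF_zero: "M \<in> midx n \<Longrightarrow> \<not> (\<forall>i. M i \<le> K i) \<Longrightarrow> FF n K M = 0"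
proof -
  assume M: "M \<in> midx n" and "\<not> (\<forall>i. M i \<le> K i)"
  then obtain i where i: "K i < M i" by (auto simp: not_le)
  then have "i \<le> n" using M by (auto simp: midx_def not_le intro: ccontr)
  then show ?thesis unfolding FF_def using i by (intro prod_zero) (auto intro!: bexI[of _ i] ffact_nat_zero)
qed

lemma FF_nz_le: "M \<in> midx n \<Longrightarrow> FF n K M \<noteq> 0 \<Longrightarrow> M i \<le> K i"
  using FF_zero by blast

lemma finite_DD: "finite (DD n L)"
proof (rule finite_subset)
  show "DD n L \<subseteq> {f. \<forall>x. (x \<in> {..n} \<longrightarrow> f x \<in> {..msize n L}) \<and> (x \<notin> {..n} \<longrightarrow> f x = 0)}"
  proof (intro subsetI CollectI allI conjI impI)
    fix M x assume M: "M \<in> DD n L"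
    { assume "x \<in> {..n}"
      then show "M x \<in> {..msize n L}"
        using M unfolding msize_def DD_def
        by simp (meson atMost_iff finite_atMost member_le_sum order_trans zero_le) }
    { assume "x \<notin> {..n}" then show "M x = 0" using M by (auto simp: DD_def midx_def) }
  qed
  show "finite \<dots>" by (rule finite_set_of_finite_funs) auto
qed

lemma wm_alt: "wick_mono n h c a b = (\<Sum>M\<in>DD n (snd a). Poly_Mapping.single (XX a b M) (c * Cf n h (snd a) (fst b) M))"
proof -
  obtain K1 L1 K2 L2 where ab: "a = (K1, L1)" "b = (K2, L2)" by force
  have "wick_mono n h c a b = (\<Sum>M\<in>{M \<in> midx n. (\<forall>i. M i \<le> L1 i) \<and> (\<forall>i. M i \<le> K2 i)}.
          Poly_Mapping.single (\<lambda>i. K1 i + K2 i - M i, \<lambda>i. L1 i - M i + L2 i)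
            (c * complex_of_real (h ^ msize n M) / of_nat (mfact n M) * dfact n L1 M * dfact n K2 M))"
    by (simp add: wick_mono_def ab)
  also have "\<dots> = (\<Sum>M\<in>DD n L1. Poly_Mapping.single (XX a b M) (c * Cf n h L1 K2 M))"
  proof (rule sum.mono_neutral_cong_left)
    show "finite (DD n L1)" by (rule finite_DD)
    show "{M \<in> midx n. (\<forall>i. M i \<le> L1 i) \<and> (\<forall>i. M i \<le> K2 i)} \<subseteq> DD n L1"
      by (auto simp: DD_def)
    show "\<forall>M\<in>DD n L1 - {M \<in> midx n. (\<forall>i. M i \<le> L1 i) \<and> (\<forall>i. M i \<le> K2 i)}.
        Poly_Mapping.single (XX a b M) (c * Cf n h L1 K2 M) = 0"
    proof
      fix M assume "M \<in> DD n L1 - {M \<in> midx n. (\<forall>i. M i \<le> L1 i) \<and> (\<forall>i. M i \<le> K2 i)}"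
      then have "M \<in> midx n" "\<not> (\<forall>i. M i \<le> K2 i)" by (auto simp: DD_def)
      then have "FF n K2 M = 0" by (rule FF_zero)
      then show "Poly_Mapping.single (XX a b M) (c * Cf n h L1 K2 M) = 0" by (simp add: Cf_def)
    qed
    fix M assume "M \<in> {M \<in> midx n. (\<forall>i. M i \<le> L1 i) \<and> (\<forall>i. M i \<le> K2 i)}"
    then show "Poly_Mapping.single (\<lambda>i. K1 i + K2 i - M i, \<lambda>i. L1 i - M i + L2 i)
            (c * complex_of_real (h ^ msize n M) / of_nat (mfact n M) * dfact n L1 M * dfact n K2 M)
        = Poly_Mapping.single (XX a b M) (c * Cf n h L1 K2 M)"
      by (simp add: dfact_FF XX_def ab Cf_def mult.assoc)
  qed
  finally show ?thesis by (simp add: ab)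
qed


lemma prod_split_j:
  assumes "j \<le> (n::nat)"
  shows "(\<Prod>i\<le>n. g i) = g j * (\<Prod>i\<in>{..n} - {j}. g i)"
  using assms by (subst prod.remove[of _ j]) auto

lemma prod_rest_cong:
  assumes "\<And>i. i \<noteq> j \<Longrightarrow> g i = g' i"
  shows "(\<Prod>i\<in>{..n::nat} - {j}. g i) = (\<Prod>i\<in>{..n} - {j}. g' i)"
  using assms by (intro prod.cong) auto

lemma FF_pascal:
  assumes j: "j \<le> n"
  shows "FF n (\<lambda>i. K i + ej j i) M = FF n K M + (if 1 \<le> M j then real (M j) * FF n K (\<lambda>i. M i - ej j i) else 0)"
proof -
  let ?R = "\<Prod>i\<in>{..n} - {j}. ffact (real (K i)) (M i)"
  have 1: "FF n (\<lambda>i. K i + ej j i) M = ffact (1 + real (K j)) (M j) * ?R"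
    unfolding FF_def using j by (subst prod_split_j[OF j]) (auto simp: ej_def intro!: prod_rest_cong)
  have 2: "FF n K M = ffact (real (K j)) (M j) * ?R"
    unfolding FF_def by (rule prod_split_j[OF j])
  have 3: "FF n K (\<lambda>i. M i - ej j i) = ffact (real (K j)) (M j - 1) * ?R"
    unfolding FF_def using j by (subst prod_split_j[OF j]) (auto simp: ej_def intro!: prod_rest_cong)
  show ?thesis unfolding 1 2 3 using ffact_pascal[of "real (K j)" "M j"] by (simp add: algebra_simps)
qed

lemma msize_plus_ej: "j \<le> n \<Longrightarrow> msize n (\<lambda>i. M i + ej j i) = msize n M + 1"
  by (simp add: msize_def sum.distrib sum_ej)

lemma mfact_plus_ej:
  assumes j: "j \<le> n"
  shows "mfact n (\<lambda>i. M i + ej j i) = mfact n M * (M j + 1)"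
proof -
  let ?R = "\<Prod>i\<in>{..n} - {j}. fact (M i) :: nat"
  have 1: "mfact n (\<lambda>i. M i + ej j i) = fact (M j + 1) * ?R"
    unfolding mfact_def by (subst prod_split_j[OF j]) (auto simp: ej_def intro!: prod_rest_cong)
  have 2: "mfact n M = fact (M j) * ?R"
    unfolding mfact_def by (rule prod_split_j[OF j])
  show ?thesis unfolding 1 2 by (simp add: algebra_simps)
qed

lemma FF_plus_ej:
  assumes j: "j \<le> n"
  shows "FF n L (\<lambda>i. M i + ej j i) = FF n L M * (real (L j) - real (M j))"
proof -
  let ?R = "\<Prod>i\<in>{..n} - {j}. ffact (real (L i)) (M i)"
  have 1: "FF n L (\<lambda>i. M i + ej j i) = ffact (real (L j)) (Suc (M j)) * ?R"
    unfolding FF_def by (subst prod_split_j[OF j]) (auto simp: ej_def intro!: prod_rest_cong)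
  have 2: "FF n L M = ffact (real (L j)) (M j) * ?R"
    unfolding FF_def by (rule prod_split_j[OF j])
  show ?thesis unfolding 1 2 ffact_Suc by (simp add: algebra_simps)
qed

lemma gen_arith: "(q::real) \<noteq> 0 \<Longrightarrow> m \<noteq> 0 \<Longrightarrow> h^(k+1) / (m*q) * (F1 * D) * (q * F2) = h^k / m * F1 * F2 * h * D"
  by (simp add: field_simps)

lemma single_cong_nz:
  "(c \<noteq> 0 \<Longrightarrow> k = k') \<Longrightarrow> Poly_Mapping.single k c = Poly_Mapping.single k' c"
  by (cases "c = 0") auto

lemma leib:
  assumes j: "j \<le> n"
  shows "wick_mono n h c a (sh j b)
    = (\<Sum>M\<in>DD n (snd a). Poly_Mapping.single (sh j (XX a b M)) (c * Cf n h (snd a) (fst b) M))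
    + (\<Sum>M\<in>DD n (snd a). Poly_Mapping.single (XX a b M)
          (c * Cf n h (snd a) (fst b) M * complex_of_real h * of_nat (snd a j - M j)))"
proof -
  let ?L1 = "snd a" and ?K2 = "fst b"
  let ?e = "ej j"
  define G2 where "G2 M = (if 1 \<le> M j then complex_of_real (h ^ msize n M / real (mfact n M) * FF n ?L1 M
      * (real (M j) * FF n ?K2 (\<lambda>i. M i - ?e i))) else 0)" for M
  have fsh: "fst (sh j b) = (\<lambda>i. ?K2 i + ?e i)" by (simp add: sh_def)
  have Cf_split: "Cf n h ?L1 (\<lambda>i. ?K2 i + ?e i) M = Cf n h ?L1 ?K2 M + G2 M" for M
    unfolding Cf_def G2_def FF_pascal[OF j] by (simp add: algebra_simps)
  have "wick_mono n h c a (sh j b)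
      = (\<Sum>M\<in>DD n ?L1. Poly_Mapping.single (XX a (sh j b) M) (c * Cf n h ?L1 ?K2 M))
      + (\<Sum>M\<in>DD n ?L1. Poly_Mapping.single (XX a (sh j b) M) (c * G2 M))"
    unfolding wm_alt fsh Cf_split by (simp add: distrib_left single_add sum.distrib)
  also have "(\<Sum>M\<in>DD n ?L1. Poly_Mapping.single (XX a (sh j b) M) (c * Cf n h ?L1 ?K2 M))
      = (\<Sum>M\<in>DD n ?L1. Poly_Mapping.single (sh j (XX a b M)) (c * Cf n h ?L1 ?K2 M))"
  proof (rule sum.cong[OF refl], rule single_cong_nz)
    fix M assume M: "M \<in> DD n ?L1" and nz: "c * Cf n h ?L1 ?K2 M \<noteq> 0"
    then have "FF n ?K2 M \<noteq> 0" by (auto simp: Cf_def)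
    then have le: "M i \<le> ?K2 i" for i using M FF_nz_le by (auto simp: DD_def)
    have e: "fst a i + (fst b i + ej j i) - M i = fst a i + fst b i - M i + ej j i" for i
      using le[of i] by arith
    show "XX a (sh j b) M = sh j (XX a b M)"
      by (simp add: XX_def sh_def fun_eq_iff e add.assoc)
  qed
  also have "(\<Sum>M\<in>DD n ?L1. Poly_Mapping.single (XX a (sh j b) M) (c * G2 M))
      = (\<Sum>M\<in>DD n ?L1. Poly_Mapping.single (XX a b M)
          (c * Cf n h ?L1 ?K2 M * complex_of_real h * of_nat (?L1 j - M j)))"
    (is "?A = ?B")
  proof -
    let ?t = "\<lambda>M. Poly_Mapping.single (XX a b M) (c * Cf n h ?L1 ?K2 M * complex_of_real h * of_nat (?L1 j - M j))"
    let ?g = "\<lambda>M. Poly_Mapping.single (XX a (sh j b) M) (c * G2 M)"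
    have "?A = (\<Sum>M\<in>{M\<in>DD n ?L1. 1 \<le> M j}. ?g M)"
      by (rule sum.mono_neutral_right) (auto simp: finite_DD G2_def)
    also have "\<dots> = (\<Sum>M\<in>{M\<in>DD n ?L1. M j < ?L1 j}. ?t M)"
    proof (rule sym, rule sum.reindex_bij_witness[where j = "\<lambda>M i. M i + ?e i" and i = "\<lambda>M i. M i - ?e i"])
      fix M assume M: "M \<in> {M \<in> DD n ?L1. M j < ?L1 j}"
      show "(\<lambda>i. M i + ?e i - ?e i) = M" by simp
      show "(\<lambda>i. M i + ?e i) \<in> {M \<in> DD n ?L1. 1 \<le> M j}"
        using M j by (auto simp: DD_def midx_def ej_def)
      have le: "M i + ?e i \<le> ?L1 i" for i using M by (auto simp: DD_def ej_def)
      have e: "?L1 i - (M i + ?e i) + (snd b i + ?e i) = ?L1 i - M i + snd b i" for i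
        using le[of i] by arith
      have key: "XX a (sh j b) (\<lambda>i. M i + ?e i) = XX a b M"
        by (simp add: XX_def sh_def fun_eq_iff e)
      have mj: "M j < ?L1 j" using M by simp
      have m1: "(\<lambda>i. M i + ?e i - ?e i) = M" by simp
      have ejj: "?e j = 1" by (simp add: ej_def)
      have mf: "real (mfact n M) \<noteq> 0" by (simp add: mfact_def)
      have coef: "G2 (\<lambda>i. M i + ?e i) = Cf n h ?L1 ?K2 M * complex_of_real h * of_nat (?L1 j - M j)"
      proof -
        have r: "h ^ (msize n M + 1) / real (mfact n M * (M j + 1)) * (FF n ?L1 M * (real (?L1 j) - real (M j)))
              * (real (M j + 1) * FF n ?K2 M)
            = (h ^ msize n M / real (mfact n M) * FF n ?L1 M * FF n ?K2 M) * h * real (?L1 j - M j)"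
          using mj mf gen_arith[of "real (M j + 1)" "real (mfact n M)" h "msize n M" "FF n ?L1 M" "real (?L1 j) - real (M j)" "FF n ?K2 M"]
          by (simp only: of_nat_mult of_nat_diff[of "M j" "?L1 j"] less_imp_le) simp
        have "G2 (\<lambda>i. M i + ?e i) = complex_of_real ((h ^ msize n M / real (mfact n M) * FF n ?L1 M * FF n ?K2 M) * h * real (?L1 j - M j))"
          unfolding G2_def m1 ejj msize_plus_ej[OF j] mfact_plus_ej[OF j] FF_plus_ej[OF j] r[symmetric]
          by simp
        then show ?thesis by (simp add: Cf_def)
      qed
      show "?g (\<lambda>i. M i + ?e i) = ?t M"
        unfolding key coef by (simp add: mult.assoc)
    next
      fix M assume M: "M \<in> {M \<in> DD n ?L1. 1 \<le> M j}"
      show "(\<lambda>i. M i - ?e i + ?e i) = M" using M by (auto simp: ej_def fun_eq_iff)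
      show "(\<lambda>i. M i - ?e i) \<in> {M \<in> DD n ?L1. M j < ?L1 j}"
        using M by (auto simp: DD_def midx_def ej_def intro: le_trans dest: spec[of _ j])
    qed
    also have "\<dots> = ?B"
    proof (rule sum.mono_neutral_left)
      show "finite (DD n ?L1)" by (rule finite_DD)
      show "{M \<in> DD n ?L1. M j < ?L1 j} \<subseteq> DD n ?L1" by auto
      show "\<forall>M\<in>DD n ?L1 - {M \<in> DD n ?L1. M j < ?L1 j}. ?t M = 0"
      proof
        fix M assume "M \<in> DD n ?L1 - {M \<in> DD n ?L1. M j < ?L1 j}"
        then have "?L1 j - M j = 0" by auto
        then show "?t M = 0" by simp
      qed
    qed
    finally show ?thesis .
  qed
  finally show ?thesis .
qed


lemma sum_diff_DD:
  assumes "M \<in> DD n L"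
  shows "(\<Sum>j\<le>n. (of_nat (L j - M j) :: complex)) = of_nat (msize n L) - of_nat (msize n M)"
  using assms by (simp add: DD_def msize_def of_nat_diff sum_subtractf)

lemma msize_XX:
  assumes "M \<in> DD n (snd a)"
  shows "(of_nat (msize n (snd (XX a b M))) :: complex)
     = of_nat (msize n (snd a)) - of_nat (msize n M) + of_nat (msize n (snd b))"
proof -
  have le: "M i \<le> snd a i" for i using assms by (auto simp: DD_def)
  have "(of_nat (msize n (snd (XX a b M))) :: complex) = (\<Sum>i\<le>n. of_nat (snd a i) - of_nat (M i) + of_nat (snd b i))"
    unfolding msize_def XX_def of_nat_sum snd_conv
  proof (rule sum.cong[OF refl])
    fix i
    have "snd a i - M i + snd b i = (snd a i + snd b i) - M i" using le[of i] by arith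
    moreover have "M i \<le> snd a i + snd b i" using le[of i] by arith
    ultimately show "(of_nat (snd a i - M i + snd b i) :: complex) = of_nat (snd a i) - of_nat (M i) + of_nat (snd b i)"
      by (simp add: of_nat_diff)
  qed
  then show ?thesis by (simp add: sum.distrib sum_subtractf msize_def)
qed

lemma leib_sum:
  "(\<Sum>j\<le>n. wick_mono n h c a (sh j b))
    = (\<Sum>M\<in>DD n (snd a). \<Sum>j\<le>n. Poly_Mapping.single (sh j (XX a b M)) (c * Cf n h (snd a) (fst b) M))
    + (\<Sum>M\<in>DD n (snd a). Poly_Mapping.single (XX a b M)
          (c * Cf n h (snd a) (fst b) M * complex_of_real h * (of_nat (msize n (snd a)) - of_nat (msize n M))))"
proof -
  have "(\<Sum>j\<le>n. wick_mono n h c a (sh j b))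
    = (\<Sum>j\<le>n. (\<Sum>M\<in>DD n (snd a). Poly_Mapping.single (sh j (XX a b M)) (c * Cf n h (snd a) (fst b) M))
    + (\<Sum>M\<in>DD n (snd a). Poly_Mapping.single (XX a b M)
          (c * Cf n h (snd a) (fst b) M * complex_of_real h * of_nat (snd a j - M j))))"
    by (rule sum.cong[OF refl]) (simp add: leib)
  also have "\<dots> = (\<Sum>M\<in>DD n (snd a). \<Sum>j\<le>n. Poly_Mapping.single (sh j (XX a b M)) (c * Cf n h (snd a) (fst b) M))
    + (\<Sum>M\<in>DD n (snd a). \<Sum>j\<le>n. Poly_Mapping.single (XX a b M)
          (c * Cf n h (snd a) (fst b) M * complex_of_real h * of_nat (snd a j - M j)))"
    by (simp add: sum.distrib sum.swap[of _ "{..n}"])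
  also have "(\<Sum>M\<in>DD n (snd a). \<Sum>j\<le>n. Poly_Mapping.single (XX a b M)
          (c * Cf n h (snd a) (fst b) M * complex_of_real h * of_nat (snd a j - M j)))
      = (\<Sum>M\<in>DD n (snd a). Poly_Mapping.single (XX a b M)
          (c * Cf n h (snd a) (fst b) M * complex_of_real h * (of_nat (msize n (snd a)) - of_nat (msize n M))))"
  proof (rule sum.cong[OF refl])
    fix M assume M: "M \<in> DD n (snd a)"
    show "(\<Sum>j\<le>n. Poly_Mapping.single (XX a b M)
          (c * Cf n h (snd a) (fst b) M * complex_of_real h * of_nat (snd a j - M j)))
      = Poly_Mapping.single (XX a b M)
          (c * Cf n h (snd a) (fst b) M * complex_of_real h * (of_nat (msize n (snd a)) - of_nat (msize n M)))"
      unfolding single_sum[symmetric] sum_distrib_left[symmetric] sum_diff_DD[OF M] ..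
  qed
  finally show ?thesis .
qed

lemma Phi_add: "Phi n h x (c + d) = Phi n h x c + Phi n h x d"
proof -
  have 1: "(\<Sum>j\<le>n. Poly_Mapping.single (sh j x) (c + d)) = (\<Sum>j\<le>n. Poly_Mapping.single (sh j x) c) + (\<Sum>j\<le>n. Poly_Mapping.single (sh j x) d)"
    by (simp add: single_add sum.distrib)
  have 2: "Poly_Mapping.single x ((c + d) * K) = Poly_Mapping.single x (c * K) + Poly_Mapping.single x (d * K)" for K
    by (simp add: distrib_right single_add)
  show ?thesis unfolding Phi_def 1 2 by (simp add: add_ac)
qed

lemma Phi_zero [simp]: "Phi n h x 0 = 0"
  by (simp add: Phi_def)

lemma mono_assoc:
  "(\<Sum>j\<le>n. wick_mono n h e a (sh j b))
     + wick_mono n h (e * (complex_of_real h * of_nat (msize n (snd b)) - 1)) a b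
   = lin (Phi n h) (wick_mono n h e a b)"
proof -
  let ?D = "DD n (snd a)"
  let ?C = "Cf n h (snd a) (fst b)"
  have "lin (Phi n h) (wick_mono n h e a b) = (\<Sum>M\<in>?D. Phi n h (XX a b M) (e * ?C M))"
    unfolding wm_alt by (simp add: lin_sum Phi_add lin_single)
  also have "\<dots> = (\<Sum>M\<in>?D. \<Sum>j\<le>n. Poly_Mapping.single (sh j (XX a b M)) (e * ?C M))
     + (\<Sum>M\<in>?D. Poly_Mapping.single (XX a b M) (e * ?C M * complex_of_real h * (of_nat (msize n (snd a)) - of_nat (msize n M)))
          + Poly_Mapping.single (XX a b M) (e * (complex_of_real h * of_nat (msize n (snd b)) - 1) * ?C M))"
    unfolding sum.distrib[symmetric]
  proof (rule sum.cong[OF refl])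
    fix M assume M: "M \<in> ?D"
    show "Phi n h (XX a b M) (e * ?C M) = (\<Sum>j\<le>n. Poly_Mapping.single (sh j (XX a b M)) (e * ?C M))
       + (Poly_Mapping.single (XX a b M) (e * ?C M * complex_of_real h * (of_nat (msize n (snd a)) - of_nat (msize n M)))
          + Poly_Mapping.single (XX a b M) (e * (complex_of_real h * of_nat (msize n (snd b)) - 1) * ?C M))"
      unfolding Phi_def single_add[symmetric] msize_XX[OF M] by (simp add: algebra_simps)
  qed
  also have "\<dots> = (\<Sum>j\<le>n. wick_mono n h e a (sh j b))
     + wick_mono n h (e * (complex_of_real h * of_nat (msize n (snd b)) - 1)) a b"
    unfolding leib_sum wm_alt[of n h "e * _"] sum.distrib by (simp add: add.assoc)
  finally show ?thesis by simp
qed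

lemma lin_Phi_add: "lin (Phi n h) (f + g) = lin (Phi n h) f + lin (Phi n h) g"
  by (rule lin_add) (simp_all add: Phi_add)

lemma lin_Phi_sum: "lin (Phi n h) (\<Sum>i\<in>I. f i) = (\<Sum>i\<in>I. lin (Phi n h) (f i))"
  by (rule lin_sum) (simp_all add: Phi_add)

lemma assoc:
  "wick n h a (wick n h b (Jpoly n - onep)) = wick n h (wick n h a b) (Jpoly n - onep)"
proof -
  have Phi_exp: "Phi n h y d = (\<Sum>j\<le>n. Poly_Mapping.single (sh j y) d)
      + Poly_Mapping.single y (d * (complex_of_real h * of_nat (msize n (snd y)) - 1))" for y d
    by (simp add: Phi_def)
  have "wick n h a (wick n h b (Jpoly n - onep))
      = (\<Sum>y\<in>Poly_Mapping.keys b. wick n h a (Phi n h y (Poly_Mapping.lookup b y)))"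
    unfolding WJ lin_def wick_sum_right ..
  also have "\<dots> = (\<Sum>y\<in>Poly_Mapping.keys b. lin (\<lambda>x c. lin (Phi n h) (wick_mono n h (c * Poly_Mapping.lookup b y) x y)) a)"
  proof (rule sum.cong[OF refl])
    fix y
    let ?d = "Poly_Mapping.lookup b y"
    have "wick n h a (Phi n h y ?d)
       = (\<Sum>j\<le>n. lin (\<lambda>x c. wick_mono n h (c * ?d) x (sh j y)) a)
         + lin (\<lambda>x c. wick_mono n h (c * (?d * (complex_of_real h * of_nat (msize n (snd y)) - 1))) x y) a"
      unfolding Phi_exp wick_add_right wick_sum_right wick_single_right ..
    also have "\<dots> = lin (\<lambda>x c. (\<Sum>j\<le>n. wick_mono n h (c * ?d) x (sh j y))
         + wick_mono n h ((c * ?d) * (complex_of_real h * of_nat (msize n (snd y)) - 1)) x y) a"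
      by (simp add: lin_plus_fun lin_sum_fun mult.assoc)
    also have "\<dots> = lin (\<lambda>x c. lin (Phi n h) (wick_mono n h (c * ?d) x y)) a"
      by (simp add: mono_assoc)
    finally show "wick n h a (Phi n h y ?d) = lin (\<lambda>x c. lin (Phi n h) (wick_mono n h (c * ?d) x y)) a" .
  qed
  also have "\<dots> = (\<Sum>x\<in>Poly_Mapping.keys a. \<Sum>y\<in>Poly_Mapping.keys b.
        lin (Phi n h) (wick_mono n h (Poly_Mapping.lookup a x * Poly_Mapping.lookup b y) x y))"
    by (simp add: lin_def sum.swap[of _ "Poly_Mapping.keys b"])
  also have "\<dots> = wick n h (wick n h a b) (Jpoly n - onep)"
    by (simp only: WJ) (simp only: wick_def lin_Phi_sum)
  finally show ?thesis .
qed


lemma poly_infinite_roots_zero: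
  fixes E :: "nat \<Rightarrow> complex"
  assumes inf: "infinite Z" and Z: "\<And>z. z \<in> Z \<Longrightarrow> (\<Sum>m\<le>N. E m * z ^ m) = 0"
  shows "\<forall>m\<le>N. E m = 0"
proof (rule ccontr)
  assume "\<not> (\<forall>m\<le>N. E m = 0)"
  then have "\<exists>k. k \<le> N \<and> E k \<noteq> 0" by auto
  then have "finite {z. (\<Sum>m\<le>N. E m * z ^ m) = 0}" by (rule polyfun_rootbound_finite)
  moreover have "Z \<subseteq> {z. (\<Sum>m\<le>N. E m * z ^ m) = 0}" using Z by auto
  ultimately show False using inf finite_subset by blast
qed

lemma infinite_of_real: "infinite (range (complex_of_real))"
proof
  assume "finite (range complex_of_real)"
  then have "finite (UNIV :: real set)" using finite_imageD inj_of_real by blast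
  then show False using infinite_UNIV_char_0 by blast
qed

definition zeta :: "real \<Rightarrow> complex" where
  "zeta x = (1 + \<i> * complex_of_real x) / (1 - \<i> * complex_of_real x)"

lemma zeta_den: "1 - \<i> * complex_of_real x \<noteq> 0"
  by (simp add: complex_eq_iff)

lemma inj_zeta: "inj zeta"
proof
  fix x y assume "zeta x = zeta y"
  then have "(1 + \<i> * complex_of_real x) * (1 - \<i> * complex_of_real y) = (1 + \<i> * complex_of_real y) * (1 - \<i> * complex_of_real x)"
    using zeta_den[of x] zeta_den[of y] by (simp add: zeta_def field_simps)
  then show "x = y" by (simp add: complex_eq_iff algebra_simps)
qed

lemma infinite_zeta: "infinite (range zeta)"
proof
  assume "finite (range zeta)"
  then have "finite (UNIV :: real set)" using finite_imageD inj_zeta by blast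
  then show False using infinite_UNIV_char_0 by blast
qed

lemma pair_lemma:
  fixes d :: "nat \<times> nat \<Rightarrow> complex"
  assumes P: "finite P" and H: "\<And>t. (\<Sum>p\<in>P. d p * t ^ fst p * cnj t ^ snd p) = 0"
  shows "\<forall>p\<in>P. d p = 0"
proof -
  define N where "N = Max ((\<lambda>p. fst p + snd p) ` P)"
  have N: "fst p + snd p \<le> N" if "p \<in> P" for p
    unfolding N_def using P that by (intro Max_ge) auto
  define E where "E u m = (\<Sum>p\<in>{p\<in>P. fst p + snd p = m}. d p * u ^ fst p * cnj u ^ snd p)" for u m
  have step1: "E u m = 0" for u m
  proof (cases "m \<le> N")
    case True
    have "\<forall>m\<le>N. E u m = 0"
    proof (rule poly_infinite_roots_zero[OF infinite_of_real])
      fix z assume "z \<in> range complex_of_real"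
      then obtain r where z: "z = complex_of_real r" by auto
      have "0 = (\<Sum>p\<in>P. d p * (z * u) ^ fst p * cnj (z * u) ^ snd p)" by (rule H[symmetric])
      also have "\<dots> = (\<Sum>p\<in>P. (d p * u ^ fst p * cnj u ^ snd p) * z ^ (fst p + snd p))"
      proof (rule sum.cong[OF refl])
        fix p
        have cz: "cnj z = z" by (simp add: z)
        show "d p * (z * u) ^ fst p * cnj (z * u) ^ snd p = d p * u ^ fst p * cnj u ^ snd p * z ^ (fst p + snd p)"
          unfolding complex_cnj_mult cz power_mult_distrib power_add by (simp only: mult_ac)
      qed
      also have "\<dots> = (\<Sum>m\<in>{..N}. \<Sum>p\<in>{p\<in>P. fst p + snd p = m}. (d p * u ^ fst p * cnj u ^ snd p) * z ^ (fst p + snd p))"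
        by (rule sum.group[symmetric]) (use P N in auto)
      also have "\<dots> = (\<Sum>m\<le>N. E u m * z ^ m)"
        by (rule sum.cong) (auto simp: E_def sum_distrib_right)
      finally show "(\<Sum>m\<le>N. E u m * z ^ m) = 0" by simp
    qed
    then show ?thesis using True by auto
  next
    case False
    then have e: "{p\<in>P. fst p + snd p = m} = {}" using N by fastforce
    show ?thesis unfolding E_def e by simp
  qed
  show ?thesis
  proof
    fix p0 assume p0: "p0 \<in> P"
    let ?m = "fst p0 + snd p0"
    let ?Pm = "{p\<in>P. fst p + snd p = ?m}"
    define F where "F a = (\<Sum>p\<in>{p\<in>?Pm. fst p = a}. d p)" for a
    have "\<forall>a\<le>N. F a = 0"
    proof (rule poly_infinite_roots_zero[OF infinite_zeta])
      fix z assume "z \<in> range zeta"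
      then obtain x where z: "z = zeta x" by auto
      define u where "u = 1 + \<i> * complex_of_real x"
      have cu: "cnj u = 1 - \<i> * complex_of_real x" by (simp add: u_def)
      have cu0: "cnj u \<noteq> 0" using zeta_den[of x] cu by simp
      have zu: "z = u / cnj u" by (simp add: z zeta_def u_def cu)
      have "0 = E u ?m" by (simp add: step1)
      also have "\<dots> = (\<Sum>p\<in>?Pm. cnj u ^ ?m * (d p * z ^ fst p))"
        unfolding E_def
      proof (rule sum.cong[OF refl])
        fix p assume "p \<in> ?Pm"
        then have s: "snd p = ?m - fst p" "fst p \<le> ?m" by auto
        have "cnj u ^ ?m = cnj u ^ fst p * cnj u ^ snd p" using s by (simp add: power_add[symmetric])
        then show "d p * u ^ fst p * cnj u ^ snd p = cnj u ^ ?m * (d p * z ^ fst p)"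
        proof -
          have "cnj u ^ fst p * z ^ fst p = u ^ fst p"
            unfolding power_mult_distrib[symmetric] zu using cu0 by simp
          note eq1 = this
          have "cnj u ^ ?m * (d p * z ^ fst p) = d p * (cnj u ^ fst p * z ^ fst p) * cnj u ^ snd p"
            unfolding \<open>cnj u ^ ?m = cnj u ^ fst p * cnj u ^ snd p\<close> by (simp only: mult_ac)
          also have "\<dots> = d p * u ^ fst p * cnj u ^ snd p" unfolding eq1 ..
          finally show ?thesis by (rule sym)
        qed
      qed
      also have "\<dots> = cnj u ^ ?m * (\<Sum>p\<in>?Pm. d p * z ^ fst p)"
        by (simp add: sum_distrib_left)
      finally have "(\<Sum>p\<in>?Pm. d p * z ^ fst p) = 0" using cu0 by simp
      moreover have "(\<Sum>p\<in>?Pm. d p * z ^ fst p) = (\<Sum>a\<in>{..N}. \<Sum>p\<in>{p\<in>?Pm. fst p = a}. d p * z ^ fst p)"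
      proof (rule sum.group[symmetric])
        show "finite ?Pm" using P by simp
        show "finite {..N}" by simp
        show "fst ` ?Pm \<subseteq> {..N}" using N by fastforce
      qed
      moreover have "\<dots> = (\<Sum>a\<le>N. F a * z ^ a)"
        by (rule sum.cong) (auto simp: F_def sum_distrib_right)
      ultimately show "(\<Sum>a\<le>N. F a * z ^ a) = 0" by simp
    qed
    moreover have "fst p0 \<le> N" using N[OF p0] by simp
    moreover have "{p\<in>?Pm. fst p = fst p0} = {p0}"
      using p0 by (auto simp: prod_eq_iff)
    ultimately show "d p0 = 0" by (auto simp: F_def)
  qed
qed


definition monoL :: "nat \<Rightarrow> (nat \<Rightarrow> nat) \<times> (nat \<Rightarrow> nat) \<Rightarrow> (nat \<Rightarrow> complex) \<Rightarrow> complex" where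
  "monoL m z w = (\<Prod>i<m. w i ^ fst z i * cnj (w i) ^ snd z i)"

lemma ITc:
  "\<forall>S c. finite S \<longrightarrow> S \<subseteq> {z. (\<forall>i\<ge>m. fst z i = 0) \<and> (\<forall>i\<ge>m. snd z i = 0)}
     \<longrightarrow> (\<forall>w. (\<Sum>z\<in>S. c z * monoL m z w) = 0) \<longrightarrow> (\<forall>z\<in>S. c z = (0::complex))"
proof (induction m)
  case 0
  show ?case
  proof (intro allI impI ballI)
    fix S c z
    assume S: "finite S" "S \<subseteq> {z. (\<forall>i\<ge>0. fst z i = 0) \<and> (\<forall>i\<ge>0. snd z i = 0)}"
      and H: "\<forall>w. (\<Sum>z\<in>S. c z * monoL 0 z w) = 0" and z: "z \<in> S"
    have "S \<subseteq> {((\<lambda>_. 0), (\<lambda>_. 0))}" using S(2) by (auto simp: prod_eq_iff fun_eq_iff)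
    then have "S = {((\<lambda>_. 0), (\<lambda>_. 0))}" using z by auto
    then show "c z = 0" using H z by (simp add: monoL_def)
  qed
next
  case (Suc m)
  show ?case
  proof (intro allI impI ballI)
    fix S c z0
    assume S: "finite S" "S \<subseteq> {z. (\<forall>i\<ge>Suc m. fst z i = 0) \<and> (\<forall>i\<ge>Suc m. snd z i = 0)}"
      and H: "\<forall>w. (\<Sum>z\<in>S. c z * monoL (Suc m) z w) = 0" and z0: "z0 \<in> S"
    define \<pi> where "\<pi> z = (fst z m, snd z m)" for z :: "(nat \<Rightarrow> nat) \<times> (nat \<Rightarrow> nat)"
    define d where "d w p = (\<Sum>z\<in>{z\<in>S. \<pi> z = p}. c z * monoL m z w)" for w p
    have dz: "\<forall>p\<in>\<pi> ` S. d w p = 0" for w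
    proof (rule pair_lemma)
      show "finite (\<pi> ` S)" using S by simp
      fix t
      have "0 = (\<Sum>z\<in>S. c z * monoL (Suc m) z (w(m := t)))" using H by simp
      also have "\<dots> = (\<Sum>z\<in>S. c z * monoL m z w * (t ^ fst (\<pi> z) * cnj t ^ snd (\<pi> z)))"
      proof (rule sum.cong[OF refl])
        fix z
        have "monoL m z (w(m := t)) = monoL m z w"
          unfolding monoL_def by (rule prod.cong) auto
        then show "c z * monoL (Suc m) z (w(m := t)) = c z * monoL m z w * (t ^ fst (\<pi> z) * cnj t ^ snd (\<pi> z))"
          by (simp add: monoL_def \<pi>_def mult.assoc)
      qed
      also have "\<dots> = (\<Sum>p\<in>\<pi> ` S. \<Sum>z\<in>{z\<in>S. \<pi> z = p}. c z * monoL m z w * (t ^ fst (\<pi> z) * cnj t ^ snd (\<pi> z)))"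
        by (rule sum.group[symmetric]) (use S in auto)
      also have "\<dots> = (\<Sum>p\<in>\<pi> ` S. d w p * t ^ fst p * cnj t ^ snd p)"
        by (rule sum.cong[OF refl]) (auto simp: d_def sum_distrib_right mult.assoc)
      finally show "(\<Sum>p\<in>\<pi> ` S. d w p * t ^ fst p * cnj t ^ snd p) = 0" by simp
    qed
    let ?p = "\<pi> z0"
    let ?Sp = "{z\<in>S. \<pi> z = ?p}"
    define \<tau> where "\<tau> z = ((fst z)(m := 0), (snd z)(m := 0))" for z :: "(nat \<Rightarrow> nat) \<times> (nat \<Rightarrow> nat)"
    have inj: "inj_on \<tau> ?Sp"
    proof
      fix x y assume x: "x \<in> ?Sp" and y: "y \<in> ?Sp" and e: "\<tau> x = \<tau> y"
      from x y have "fst x m = fst y m" "snd x m = snd y m" by (auto simp: \<pi>_def)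
      moreover have "fst x i = fst y i" "snd x i = snd y i" if "i \<noteq> m" for i
        using e that by (auto simp: \<tau>_def prod_eq_iff fun_eq_iff dest!: spec[of _ i])
      ultimately show "x = y"
        by (metis prod_eqI ext)
    qed
    have monoL_tau: "monoL m (\<tau> z) w = monoL m z w" for z w
      unfolding monoL_def \<tau>_def by (rule prod.cong) auto
    let ?c' = "\<lambda>y. c (the_inv_into ?Sp \<tau> y)"
    have fin: "finite (\<tau> ` ?Sp)" using S by simp
    have sub: "\<tau> ` ?Sp \<subseteq> {z. (\<forall>i\<ge>m. fst z i = 0) \<and> (\<forall>i\<ge>m. snd z i = 0)}"
        using S(2) by (auto simp: \<tau>_def)
    have sumz: "(\<Sum>y\<in>\<tau> ` ?Sp. ?c' y * monoL m y w) = 0" for w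
    proof -
      have "(\<Sum>y\<in>\<tau> ` ?Sp. ?c' y * monoL m y w) = (\<Sum>z\<in>?Sp. ?c' (\<tau> z) * monoL m (\<tau> z) w)"
        by (rule sum.reindex[OF inj, unfolded comp_def])
      also have "\<dots> = d w ?p"
        unfolding d_def by (rule sum.cong[OF refl]) (simp add: the_inv_into_f_f[OF inj] monoL_tau)
      also have "\<dots> = 0" using dz[of w] z0 by auto
      finally show "(\<Sum>y\<in>\<tau> ` ?Sp. ?c' y * monoL m y w) = 0" .
    qed
    have IH: "?c' y = 0" if "y \<in> \<tau> ` ?Sp" for y
      by (rule Suc.IH[rule_format, OF fin sub sumz that])
    have "z0 \<in> ?Sp" using z0 by simp
    then have "?c' (\<tau> z0) = 0" using IH by blast
    then show "c z0 = 0" using the_inv_into_f_f[OF inj \<open>z0 \<in> ?Sp\<close>] by simp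
  qed
qed


lemma pconj_lin: "pconj f = lin (\<lambda>x c. Poly_Mapping.single (snd x, fst x) (cnj c)) f"
  by (simp add: pconj_def lin_def split_def)

lemma pconj_add: "pconj (f + g) = pconj f + pconj g"
  unfolding pconj_lin by (rule lin_add) (simp_all add: single_add)

lemma pconj_zero [simp]: "pconj 0 = 0"
  by (simp add: pconj_def)

lemma pconj_sum: "pconj (\<Sum>i\<in>I. f i) = (\<Sum>i\<in>I. pconj (f i))"
  unfolding pconj_lin by (rule lin_sum) (simp_all add: single_add)

lemma pconj_single: "pconj (Poly_Mapping.single x c) = Poly_Mapping.single (snd x, fst x) (cnj c)"
  unfolding pconj_lin by (rule lin_single) simp

lemma pconj_expand: "pconj f = (\<Sum>x\<in>Poly_Mapping.keys f. Poly_Mapping.single (snd x, fst x) (cnj (Poly_Mapping.lookup f x)))"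
  by (simp add: pconj_def split_def)

lemma pconj_pconj: "pconj (pconj f) = f"
proof -
  have "pconj (pconj f) = (\<Sum>x\<in>Poly_Mapping.keys f. Poly_Mapping.single x (Poly_Mapping.lookup f x))"
    unfolding pconj_expand[of f] pconj_sum pconj_single by simp
  also have "\<dots> = f" using lin_single_expand[of f] by (simp add: lin_def)
  finally show ?thesis .
qed

lemma cnj_dfact [simp]: "cnj (dfact n L M) = dfact n L M"
  by (simp add: dfact_def)

lemma pconj_wm: "pconj (wick_mono n h c a b) = wick_mono n h (cnj c) (snd b, fst b) (snd a, fst a)"
proof -
  obtain K1 L1 K2 L2 where ab: "a = (K1, L1)" "b = (K2, L2)" by force
  have S: "{M \<in> midx n. (\<forall>i. M i \<le> K2 i) \<and> (\<forall>i. M i \<le> L1 i)} = {M \<in> midx n. (\<forall>i. M i \<le> L1 i) \<and> (\<forall>i. M i \<le> K2 i)}"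
    by blast
  show ?thesis
    unfolding ab wick_mono_def prod.case pconj_sum pconj_single fst_conv snd_conv S
  proof (rule sum.cong[OF refl])
    fix M assume M: "M \<in> {M \<in> midx n. (\<forall>i. M i \<le> L1 i) \<and> (\<forall>i. M i \<le> K2 i)}"
    have k1: "(\<lambda>i. L1 i - M i + L2 i) = (\<lambda>i. L2 i + L1 i - M i)"
      using M by (auto simp: fun_eq_iff)
    have k2: "(\<lambda>i. K1 i + K2 i - M i) = (\<lambda>i. K2 i - M i + K1 i)"
      using M by (auto simp: fun_eq_iff)
    show "Poly_Mapping.single (\<lambda>i. L1 i - M i + L2 i, \<lambda>i. K1 i + K2 i - M i)
        (cnj (c * complex_of_real (h ^ msize n M) / of_nat (mfact n M) * dfact n L1 M * dfact n K2 M)) =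
      Poly_Mapping.single (\<lambda>i. L2 i + L1 i - M i, \<lambda>i. K2 i - M i + K1 i)
        (cnj c * complex_of_real (h ^ msize n M) / of_nat (mfact n M) * dfact n K2 M * dfact n L1 M)"
      unfolding k1 k2 by (simp add: mult_ac)
  qed
qed

lemma pconj_wick: "pconj (wick n h f g) = wick n h (pconj g) (pconj f)"
proof -
  have "pconj (wick n h f g) = (\<Sum>a\<in>Poly_Mapping.keys f. \<Sum>b\<in>Poly_Mapping.keys g.
      wick_mono n h (cnj (Poly_Mapping.lookup f a) * cnj (Poly_Mapping.lookup g b)) (snd b, fst b) (snd a, fst a))"
    unfolding wick_def pconj_sum pconj_wm by simp
  also have "\<dots> = wick n h (pconj g) (pconj f)"
    unfolding pconj_expand[of g] pconj_expand[of f] wick_sum_left wick_sum_right wick_single_single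
    by (simp add: mult.commute)
  finally show ?thesis .
qed

lemma Pkk_add: "f \<in> Pkk n \<Longrightarrow> g \<in> Pkk n \<Longrightarrow> f + g \<in> Pkk n"
  using keys_add[of f g] by (auto simp: Pkk_iff)

lemma Pkk_diff: "f \<in> Pkk n \<Longrightarrow> g \<in> Pkk n \<Longrightarrow> f - g \<in> Pkk n"
  using keys_diff[of f g] by (auto simp: Pkk_iff)

lemma Pkk_zero [simp]: "0 \<in> Pkk n"
  by (simp add: Pkk_iff)

lemma Pkk_sum: "(\<And>i. i \<in> I \<Longrightarrow> f i \<in> Pkk n) \<Longrightarrow> (\<Sum>i\<in>I. f i) \<in> Pkk n"
  using keys_sum[of f I] by (fastforce simp: Pkk_iff)

lemma Pkk_single: "bal n x \<Longrightarrow> Poly_Mapping.single x c \<in> Pkk n"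
  by (simp add: Pkk_iff)

lemma bal_swap: "bal n x \<Longrightarrow> bal n (snd x, fst x)"
  by (auto simp: bal_def)

lemma Pkk_pconj: "f \<in> Pkk n \<Longrightarrow> pconj f \<in> Pkk n"
  unfolding pconj_expand by (rule Pkk_sum) (auto intro!: Pkk_single bal_swap simp: Pkk_iff)

lemma bal_sh: "j \<le> n \<Longrightarrow> bal n x \<Longrightarrow> bal n (sh j x)"
  by (auto simp: bal_def msize_sh msize_sh2) (auto simp: sh_def midx_def ej_def)

lemma Pkk_Phi: "bal n x \<Longrightarrow> Phi n h x c \<in> Pkk n"
  unfolding Phi_def by (intro Pkk_add Pkk_sum Pkk_single bal_sh) auto

lemma Pkk_linPhi: "f \<in> Pkk n \<Longrightarrow> lin (Phi n h) f \<in> Pkk n"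
  unfolding lin_def by (rule Pkk_sum, rule Pkk_Phi) (auto simp: Pkk_iff)

lemma bal_wm_key:
  assumes a: "bal n a" and b: "bal n b" and M: "M \<in> midx n" "\<forall>i. M i \<le> snd a i" "\<forall>i. M i \<le> fst b i"
  shows "bal n ((\<lambda>i. fst a i + fst b i - M i), (\<lambda>i. snd a i - M i + snd b i))"
proof -
  have s1: "msize n (\<lambda>i. fst a i + fst b i - M i) + msize n M = msize n (fst a) + msize n (fst b)"
    unfolding msize_def sum.distrib[symmetric]
  proof (rule sum.cong[OF refl])
    fix i have "M i \<le> fst b i" using M by auto
    then show "fst a i + fst b i - M i + M i = fst a i + fst b i" by arith
  qed
  have s2: "msize n (\<lambda>i. snd a i - M i + snd b i) + msize n M = msize n (snd a) + msize n (snd b)"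
    unfolding msize_def sum.distrib[symmetric]
  proof (rule sum.cong[OF refl])
    fix i have "M i \<le> snd a i" using M by auto
    then show "snd a i - M i + snd b i + M i = snd a i + snd b i" by arith
  qed
  show ?thesis using a b M s1 s2 by (auto simp: bal_def midx_def)
qed

lemma Pkk_wm:
  assumes a: "bal n a" and b: "bal n b"
  shows "wick_mono n h c a b \<in> Pkk n"
proof -
  obtain K1 L1 K2 L2 where ab: "a = (K1, L1)" "b = (K2, L2)" by force
  show ?thesis
    unfolding wick_mono_def ab prod.case
    by (rule Pkk_sum, rule Pkk_single) (use bal_wm_key[OF a b] ab in auto)
qed

lemma Pkk_wick: "f \<in> Pkk n \<Longrightarrow> g \<in> Pkk n \<Longrightarrow> wick n h f g \<in> Pkk n"
  unfolding wick_def by (intro Pkk_sum Pkk_wm) (auto simp: Pkk_iff)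

lemma bal_zero: "bal n ((\<lambda>_. 0), (\<lambda>_. 0))"
  by (simp add: bal_def)

lemma onep_Pkk: "onep \<in> Pkk n"
  unfolding onep_def by (rule Pkk_single[OF bal_zero])

lemma Jm_eq: "Jpoly n - onep = lin (Phi n h) onep"
proof -
  have "lin (Phi n h) onep = Phi n h ((\<lambda>_. 0), (\<lambda>_. 0)) 1"
    unfolding onep_def by (rule lin_single) simp
  also have "\<dots> = Jpoly n - onep"
    by (simp add: Phi_def Jpoly_ej onep_def sh_def single_uminus)
  finally show ?thesis by simp
qed

lemma Jm_Pkk: "Jpoly n - onep \<in> Pkk n"
  unfolding Jm_eq[of n 0] by (rule Pkk_linPhi[OF onep_Pkk])


lemma cline_iff: "v \<in> cline w \<longleftrightarrow> (\<exists>c. c \<noteq> 0 \<and> v = (\<lambda>i. c * w i))"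
  by (auto simp: cline_def)

lemma Jval_scale: "Jval n (\<lambda>i. c * w i) = (cmod c)\<^sup>2 * Jval n w"
  by (simp add: Jval_def norm_mult power_mult_distrib sum_distrib_left)

lemma Jval_pos:
  assumes "w \<in> Cvec n" "w \<noteq> (\<lambda>_. 0)"
  shows "Jval n w > 0"
proof -
  obtain i where i: "w i \<noteq> 0" using assms(2) by auto
  then have "i \<le> n" using assms(1) by (auto simp: Cvec_def not_le intro: ccontr)
  then have "(cmod (w i))\<^sup>2 \<le> Jval n w"
    unfolding Jval_def by (intro member_le_sum) auto
  moreover have "(cmod (w i))\<^sup>2 > 0" using i by simp
  ultimately show ?thesis by linarith
qed

lemma pt_cline:
  assumes "w \<in> Cvec n" "w \<noteq> (\<lambda>_. 0)"
  shows "pt n (cline w) \<in> cline w \<and> Jval n (pt n (cline w)) = 1"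
proof -
  define c where "c = complex_of_real (1 / sqrt (Jval n w))"
  have J: "Jval n w > 0" using Jval_pos[OF assms] .
  have c0: "c \<noteq> 0" using J by (simp add: c_def)
  have mem: "(\<lambda>i. c * w i) \<in> cline w" using c0 by (auto simp: cline_iff)
  have "cmod c = 1 / sqrt (Jval n w)" using J unfolding c_def norm_of_real by simp
  then have "Jval n (\<lambda>i. c * w i) = 1" using J by (simp add: Jval_scale power_divide)
  with mem have "(\<lambda>i. c * w i) \<in> cline w \<and> Jval n (\<lambda>i. c * w i) = 1" by simp
  then show ?thesis unfolding pt_def by (rule someI[where P="\<lambda>v. v \<in> cline w \<and> Jval n v = 1"])
qed

lemma CP_elim:
  assumes "p \<in> CP n"
  obtains w where "w \<in> Cvec n" "w \<noteq> (\<lambda>_. 0)" "p = cline w"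
  using assms by (auto simp: CP_def)

lemma pt_CP: "p \<in> CP n \<Longrightarrow> Jval n (pt n p) = 1"
  by (erule CP_elim) (use pt_cline in blast)

lemma cline_CP: "w \<in> Cvec n \<Longrightarrow> w \<noteq> (\<lambda>_. 0) \<Longrightarrow> cline w \<in> CP n"
  by (auto simp: CP_def)

lemma mono_scale: "mmono n z (\<lambda>i. c * w i) = c ^ msize n (fst z) * cnj c ^ msize n (snd z) * mmono n z w"
  by (simp add: mmono_def msize_def power_mult_distrib prod.distrib power_sum mult_ac)

lemma evalw_scale_hom:
  assumes "\<forall>z\<in>Poly_Mapping.keys y. msize n (fst z) = N \<and> msize n (snd z) = N"
  shows "evalw n r y (\<lambda>i. c * w i) = (c * cnj c) ^ N * evalw n r y w"
  unfolding evalw_def lin_def sum_distrib_left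
  by (rule sum.cong[OF refl]) (use assms in \<open>simp add: mono_scale power_mult_distrib mult_ac\<close>)

lemma mono_trunc: "mmono n z w = mmono n z (\<lambda>i. if i \<le> n then w i else 0)"
  unfolding mmono_def by (rule prod.cong) auto

lemma evalw_trunc: "evalw n r y w = evalw n r y (\<lambda>i. if i \<le> n then w i else 0)"
  unfolding evalw_def lin_def by (rule sum.cong[OF refl]) (simp add: mono_trunc[symmetric])

lemma IT_poly:
  assumes K: "\<forall>z\<in>Poly_Mapping.keys f. fst z \<in> midx n \<and> snd z \<in> midx n"
    and H: "\<And>w. evalw n (\<lambda>_. 1) f w = 0"
  shows "f = 0"
proof -
  have fin: "finite (Poly_Mapping.keys f)" by simp
  have sub: "Poly_Mapping.keys f \<subseteq> {z. (\<forall>i\<ge>Suc n. fst z i = 0) \<and> (\<forall>i\<ge>Suc n. snd z i = 0)}"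
    using K by (auto simp: midx_def Suc_le_eq)
  have sumz: "(\<Sum>z\<in>Poly_Mapping.keys f. Poly_Mapping.lookup f z * monoL (Suc n) z w) = 0" for w
  proof -
    have "evalw n (\<lambda>_. 1) f w = (\<Sum>z\<in>Poly_Mapping.keys f. Poly_Mapping.lookup f z * monoL (Suc n) z w)"
      by (simp add: evalw_def lin_def mmono_def monoL_def lessThan_Suc_atMost)
    then show ?thesis using H by simp
  qed
  have "\<forall>z\<in>Poly_Mapping.keys f. Poly_Mapping.lookup f z = 0"
  proof
    fix z assume "z \<in> Poly_Mapping.keys f"
    then show "Poly_Mapping.lookup f z = 0" by (rule ITc[of "Suc n", rule_format, OF fin sub sumz])
  qed
  then show ?thesis by (metis in_keys_iff keys_eq_empty equals0I)
qed

lemma hom_zero: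
  assumes h: "h \<noteq> 0" "\<forall>k::nat. k \<ge> 1 \<longrightarrow> h \<noteq> 1 / real k"
    and y: "y \<in> Pkk n" and hom: "\<forall>z\<in>Poly_Mapping.keys y. msize n (fst z) = N"
    and P: "\<forall>p\<in>CP n. Psi n h y p = 0"
  shows "y = 0"
proof -
  have hom2: "\<forall>z\<in>Poly_Mapping.keys y. msize n (fst z) = N \<and> msize n (snd z) = N"
    using y hom by (auto simp: Pkk_iff bal_def)
  have er: "evalw n (rho h) y w = complex_of_real (rho h N) * evalw n (\<lambda>_. 1) y w" for w
    unfolding evalw_def lin_def sum_distrib_left
    by (rule sum.cong[OF refl]) (use hom in simp)
  have A: "evalw n (\<lambda>_. 1) y w = 0" if wC: "w \<in> Cvec n" and wnz: "w \<noteq> (\<lambda>_. 0)" for w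
  proof -
    have p: "cline w \<in> CP n" using wC wnz by (rule cline_CP)
    obtain c where c: "c \<noteq> 0" "pt n (cline w) = (\<lambda>i. c * w i)"
      using pt_cline[OF wC wnz] by (auto simp: cline_iff)
    have "0 = Psi n h y (cline w)" using P p by simp
    also have "\<dots> = complex_of_real (rho h N) * ((c * cnj c) ^ N * evalw n (\<lambda>_. 1) y w)"
      using p by (simp add: Psi_eq er c evalw_scale_hom[OF hom2])
    finally show ?thesis using c rho_nonzero[OF h] by simp
  qed
  have "evalw n (\<lambda>_. 1) y w = 0" for w
  proof -
    let ?w = "\<lambda>i. if i \<le> n then w i else 0"
    have wC: "?w \<in> Cvec n" by (simp add: Cvec_def)
    show ?thesis
    proof (cases "?w = (\<lambda>_. 0)")
      case False
      then show ?thesis using A[OF wC False] evalw_trunc[of n "\<lambda>_. 1" y w] by simp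
    next
      case True
      let ?e = "\<lambda>i. if i = 0 then 1 else (0::complex)"
      have eC: "?e \<in> Cvec n" "?e \<noteq> (\<lambda>_. 0)" by (auto simp: Cvec_def fun_eq_iff)
      have "?w = (\<lambda>i. 0 * ?e i)" using True by simp
      then have "evalw n (\<lambda>_. 1) y ?w = (0 * cnj 0) ^ N * evalw n (\<lambda>_. 1) y ?e"
        using evalw_scale_hom[OF hom2, of "\<lambda>_. 1" 0 ?e] by simp
      also have "\<dots> = 0" using A[OF eC] by simp
      finally show ?thesis using evalw_trunc[of n "\<lambda>_. 1" y w] by simp
    qed
  qed
  moreover have "\<forall>z\<in>Poly_Mapping.keys y. fst z \<in> midx n \<and> snd z \<in> midx n"
    using y by (auto simp: Pkk_iff bal_def)
  ultimately show ?thesis using IT_poly by blast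
qed


lemma lookup_hcomp: "Poly_Mapping.lookup (hcomp n k f) z = (if msize n (fst z) = k then Poly_Mapping.lookup f z else 0)"
  unfolding hcomp_eq lookup_sum lookup_single by (auto simp: when_def in_keys_iff)

lemma hcomp_Pkk: "f \<in> Pkk n \<Longrightarrow> hcomp n k f \<in> Pkk n"
  unfolding hcomp_eq by (rule Pkk_sum, rule Pkk_single) (auto simp: Pkk_iff)

lemma sc_add: "sc g (f1 + f2) = sc g f1 + sc g f2"
  by (rule poly_mapping_eqI) (simp add: lookup_sc lookup_add algebra_simps)

lemma sc_zero [simp]: "sc g 0 = 0"
  by (rule poly_mapping_eqI) (simp add: lookup_sc)

lemma sc_single: "sc g (Poly_Mapping.single x c) = Poly_Mapping.single x (g x * c)"
  by (rule poly_mapping_eqI) (simp add: lookup_sc lookup_single when_def)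

lemma sc_sum: "sc g (\<Sum>i\<in>I. f i) = (\<Sum>i\<in>I. sc g (f i))"
  by (induction I rule: infinite_finite_induct) (auto simp: sc_add)

definition Jmul :: "nat \<Rightarrow> cpoly \<Rightarrow> cpoly" where
  "Jmul n y = (\<Sum>z\<in>Poly_Mapping.keys y. \<Sum>j\<le>n. Poly_Mapping.single (sh j z) (Poly_Mapping.lookup y z))"

lemma Jmul_Pkk: "y \<in> Pkk n \<Longrightarrow> Jmul n y \<in> Pkk n"
  unfolding Jmul_def by (intro Pkk_sum Pkk_single bal_sh) (auto simp: Pkk_iff)

lemma keys_Jmul:
  assumes "x \<in> Poly_Mapping.keys (Jmul n y)"
  shows "\<exists>z\<in>Poly_Mapping.keys y. \<exists>j\<le>n. x = sh j z"
proof -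
  have "x \<in> (\<Union>z\<in>Poly_Mapping.keys y. Poly_Mapping.keys (\<Sum>j\<le>n. Poly_Mapping.single (sh j z) (Poly_Mapping.lookup y z)))"
    using assms unfolding Jmul_def by (rule subsetD[OF keys_sum])
  then obtain z where z: "z \<in> Poly_Mapping.keys y"
    and x: "x \<in> Poly_Mapping.keys (\<Sum>j\<le>n. Poly_Mapping.single (sh j z) (Poly_Mapping.lookup y z))"
    by blast
  have "x \<in> (\<Union>j\<in>{..n}. Poly_Mapping.keys (Poly_Mapping.single (sh j z) (Poly_Mapping.lookup y z)))"
    using x by (rule subsetD[OF keys_sum])
  then obtain j where "j \<le> n" "x \<in> Poly_Mapping.keys (Poly_Mapping.single (sh j z) (Poly_Mapping.lookup y z))"
    by blast
  then show ?thesis using z by (auto split: if_splits)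
qed

lemma linPhi_sc_hom:
  assumes y: "y \<in> Pkk n" and hom: "\<forall>z\<in>Poly_Mapping.keys y. msize n (fst z) = N"
    and s: "s * (complex_of_real h * of_nat N - 1) = 1"
  shows "lin (Phi n h) (sc (\<lambda>_. s) y) = sc (\<lambda>_. s) (Jmul n y) + y"
proof -
  have "lin (Phi n h) (sc (\<lambda>_. s) y) = (\<Sum>z\<in>Poly_Mapping.keys y. Phi n h z (s * Poly_Mapping.lookup y z))"
    by (subst lin_superset[where S = "Poly_Mapping.keys y"]) (auto simp: keys_sc lookup_sc)
  also have "\<dots> = (\<Sum>z\<in>Poly_Mapping.keys y. (\<Sum>j\<le>n. Poly_Mapping.single (sh j z) (s * Poly_Mapping.lookup y z))
       + Poly_Mapping.single z (Poly_Mapping.lookup y z))"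
  proof (rule sum.cong[OF refl])
    fix z assume z: "z \<in> Poly_Mapping.keys y"
    then have "msize n (snd z) = N" using y hom by (auto simp: Pkk_iff bal_def)
    then have "s * Poly_Mapping.lookup y z * (complex_of_real h * of_nat (msize n (snd z)) - 1) = Poly_Mapping.lookup y z"
      using s by (simp add: mult_ac)
    note eqc = this
    show "Phi n h z (s * Poly_Mapping.lookup y z) = (\<Sum>j\<le>n. Poly_Mapping.single (sh j z) (s * Poly_Mapping.lookup y z))
       + Poly_Mapping.single z (Poly_Mapping.lookup y z)" unfolding Phi_def eqc ..
  qed
  also have "\<dots> = sc (\<lambda>_. s) (Jmul n y) + y"
    unfolding Jmul_def sc_sum sc_single sum.distrib
    using lin_single_expand[of y] by (simp add: lin_def)
  finally show ?thesis .
qed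

lemma R:
  assumes h: "h \<noteq> 0" "\<forall>k::nat. k \<ge> 1 \<longrightarrow> h \<noteq> 1 / real k"
  shows "x \<in> Pkk n \<Longrightarrow> (\<forall>z\<in>Poly_Mapping.keys x. msize n (fst z) \<le> N) \<Longrightarrow>
    \<exists>b\<in>Pkk n. \<exists>y\<in>Pkk n. (\<forall>z\<in>Poly_Mapping.keys y. msize n (fst z) = N) \<and> x = wick n h b (Jpoly n - onep) + y"
proof (induction N arbitrary: x)
  case 0
  then show ?case by (intro bexI[of _ 0] bexI[of _ x]) auto
next
  case (Suc N)
  let ?xN = "hcomp n (Suc N) x"
  let ?x' = "x - ?xN"
  have xN: "?xN \<in> Pkk n" using Suc.prems(1) by (rule hcomp_Pkk)
  have x': "?x' \<in> Pkk n" using Suc.prems(1) xN by (rule Pkk_diff)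
  have deg': "\<forall>z\<in>Poly_Mapping.keys ?x'. msize n (fst z) \<le> N"
  proof
    fix z assume z: "z \<in> Poly_Mapping.keys ?x'"
    then have nz: "Poly_Mapping.lookup x z - Poly_Mapping.lookup ?xN z \<noteq> 0"
      by (simp add: in_keys_iff lookup_minus)
    then have "msize n (fst z) \<noteq> Suc N" by (auto simp: lookup_hcomp)
    moreover have "z \<in> Poly_Mapping.keys x" using nz by (auto simp: lookup_hcomp in_keys_iff split: if_splits)
    ultimately show "msize n (fst z) \<le> N" using Suc.prems(2) by fastforce
  qed
  obtain b' y' where b': "b' \<in> Pkk n" and y': "y' \<in> Pkk n" and hom': "\<forall>z\<in>Poly_Mapping.keys y'. msize n (fst z) = N"
    and eq': "?x' = wick n h b' (Jpoly n - onep) + y'"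
    using Suc.IH[OF x' deg'] by blast
  have den: "complex_of_real h * of_nat N - 1 \<noteq> 0"
  proof
    assume "complex_of_real h * of_nat N - 1 = 0"
    then have "h * real N = 1" by (metis (mono_tags) eq_iff_diff_eq_0 of_real_1 of_real_eq_iff of_real_mult of_real_of_nat_eq)
    then have "N \<ge> 1" "h = 1 / real N" by (cases N; auto simp: field_simps)+
    with h show False by auto
  qed
  define s where "s = 1 / (complex_of_real h * of_nat N - 1)"
  have s: "s * (complex_of_real h * of_nat N - 1) = 1" using den by (simp add: s_def)
  define b where "b = b' + sc (\<lambda>_. s) y'"
  define y where "y = ?xN - sc (\<lambda>_. s) (Jmul n y')"
  have b: "b \<in> Pkk n" unfolding b_def by (intro Pkk_add b' sc_Pkk y')
  have y: "y \<in> Pkk n" unfolding y_def by (intro Pkk_diff xN sc_Pkk Jmul_Pkk y')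
  have homy: "\<forall>z\<in>Poly_Mapping.keys y. msize n (fst z) = Suc N"
  proof
    fix z assume "z \<in> Poly_Mapping.keys y"
    then have "z \<in> Poly_Mapping.keys ?xN \<union> Poly_Mapping.keys (sc (\<lambda>_. s) (Jmul n y'))"
      unfolding y_def by (rule subsetD[OF keys_diff])
    then have "z \<in> Poly_Mapping.keys ?xN \<or> z \<in> Poly_Mapping.keys (Jmul n y')"
      using keys_sc[of "\<lambda>_. s" "Jmul n y'"] by blast
    then show "msize n (fst z) = Suc N"
    proof
      assume "z \<in> Poly_Mapping.keys ?xN"
      then show ?thesis by (auto simp: in_keys_iff lookup_hcomp split: if_splits)
    next
      assume "z \<in> Poly_Mapping.keys (Jmul n y')"
      then obtain z' j where "z' \<in> Poly_Mapping.keys y'" "j \<le> n" "z = sh j z'"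
        using keys_Jmul by blast
      then show ?thesis using hom' by (simp add: msize_sh)
    qed
  qed
  have "wick n h b (Jpoly n - onep) + y
      = wick n h b' (Jpoly n - onep) + lin (Phi n h) (sc (\<lambda>_. s) y') + y"
    unfolding b_def WJ lin_Phi_add ..
  also have "\<dots> = wick n h b' (Jpoly n - onep) + (sc (\<lambda>_. s) (Jmul n y') + y') + y"
    by (simp only: linPhi_sc_hom[OF y' hom' s])
  also have "\<dots> = ?x' + ?xN" unfolding eq' y_def by (simp add: algebra_simps)
  also have "\<dots> = x" by simp
  finally show ?case using b y homy by blast
qed

lemma Psi_add: "Psi n h (f + g) p = Psi n h f p + Psi n h g p"
  by (simp add: Psi_eq evalw_add)

lemma Psi_diff: "Psi n h (f - g) p = Psi n h f p - Psi n h g p"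
  by (simp add: Psi_eq evalw_diff)

lemma Psi_zero [simp]: "Psi n h 0 p = 0"
  by (simp add: Psi_eq)

lemma smul_sc: "smul c f = sc (\<lambda>_. c) f"
  by (rule poly_mapping_eqI) (simp add: smul_def lookup_sc Poly_Mapping.map.rep_eq when_def)

lemma Psi_smul: "Psi n h (smul c f) p = c * Psi n h f p"
  by (simp add: Psi_eq smul_sc evalw_sc, simp add: evalw_def lin_def sum_distrib_left mult_ac)

lemma Psi_linPhi:
  assumes "h \<noteq> 0" "b \<in> Pkk n"
  shows "Psi n h (lin (Phi n h) b) p = 0"
  using assms by (simp add: Psi_eq evalw_lin_Phi pt_CP)

lemma Psi_wickJ:
  assumes "h \<noteq> 0" "b \<in> Pkk n"
  shows "Psi n h (wick n h b (Jpoly n - onep)) = (\<lambda>_. 0)"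
  using assms by (simp add: WJ Psi_linPhi fun_eq_iff)

lemma kernel_rep:
  assumes h: "h \<noteq> 0" "\<forall>k::nat. k \<ge> 1 \<longrightarrow> h \<noteq> 1 / real k"
    and x: "x \<in> Pkk n" and P: "Psi n h x = (\<lambda>_. 0)"
  shows "\<exists>b\<in>Pkk n. x = wick n h b (Jpoly n - onep)"
proof -
  obtain N where N: "\<forall>z\<in>Poly_Mapping.keys x. msize n (fst z) \<le> N"
    using finite_nat_set_iff_bounded_le[of "(\<lambda>z. msize n (fst z)) ` Poly_Mapping.keys x"] by auto
  obtain b y where b: "b \<in> Pkk n" and y: "y \<in> Pkk n" and hom: "\<forall>z\<in>Poly_Mapping.keys y. msize n (fst z) = N"
    and eq: "x = wick n h b (Jpoly n - onep) + y"
    using R[OF h x N] by blast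
  have "y = x - wick n h b (Jpoly n - onep)" using eq by simp
  then have "\<forall>p\<in>CP n. Psi n h y p = 0"
    using P Psi_wickJ[OF h(1) b] by (simp add: Psi_diff fun_eq_iff)
  then have "y = 0" using hom_zero[OF h y hom] by blast
  then show ?thesis using eq b by auto
qed

definition KK :: "nat \<Rightarrow> real \<Rightarrow> cpoly set" where
  "KK n h = {f \<in> Pkk n. Psi n h f = (\<lambda>_. 0)}"

lemma Psi_pconj_zero:
  assumes "f \<in> Pkk n" "Psi n h f = (\<lambda>_. 0)"
  shows "Psi n h (pconj f) = (\<lambda>_. 0)"
proof
  fix p show "Psi n h (pconj f) p = 0"
  proof (cases "p \<in> CP n")
    case True then show ?thesis using part3[OF assms(1) True, of h] assms(2) by simp
  qed (simp add: Psi_eq)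
qed

lemma KK_star_ideal:
  assumes h: "h \<noteq> 0" "\<forall>k::nat. k \<ge> 1 \<longrightarrow> h \<noteq> 1 / real k"
  shows "star_ideal n h (KK n h)"
proof -
  have left: "wick n h a x \<in> KK n h" if a: "a \<in> Pkk n" and x: "x \<in> KK n h" for a x
  proof -
    obtain b where b: "b \<in> Pkk n" and xb: "x = wick n h b (Jpoly n - onep)"
      using kernel_rep[OF h] x by (auto simp: KK_def)
    have "wick n h a x = wick n h (wick n h a b) (Jpoly n - onep)" unfolding xb by (rule assoc)
    moreover have "wick n h a b \<in> Pkk n" using a b by (rule Pkk_wick)
    ultimately show ?thesis
      using Psi_wickJ[OF h(1)] Pkk_wick[OF _ Jm_Pkk] by (auto simp: KK_def)
  qed
  have conj: "pconj x \<in> KK n h" if x: "x \<in> KK n h" for x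
    using x Pkk_pconj Psi_pconj_zero by (auto simp: KK_def)
  show ?thesis unfolding star_ideal_def
  proof (intro conjI ballI allI)
    show "KK n h \<subseteq> Pkk n" by (auto simp: KK_def)
    show "0 \<in> KK n h" by (auto simp: KK_def fun_eq_iff)
    show "x + y \<in> KK n h" if "x \<in> KK n h" "y \<in> KK n h" for x y
      using that by (auto simp: KK_def Pkk_add Psi_add fun_eq_iff)
    show "smul c x \<in> KK n h" if "x \<in> KK n h" for c x
      using that by (auto simp: KK_def smul_sc sc_Pkk fun_eq_iff Psi_smul[unfolded smul_sc])
    show "wick n h a x \<in> KK n h" if "a \<in> Pkk n" "x \<in> KK n h" for a x
      using left that .
    show "wick n h x a \<in> KK n h" if a: "a \<in> Pkk n" and x: "x \<in> KK n h" for a x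
    proof -
      have "wick n h (pconj a) (pconj x) \<in> KK n h"
        using left[OF Pkk_pconj[OF a] conj[OF x]] .
      then have "pconj (wick n h (pconj a) (pconj x)) \<in> KK n h" by (rule conj)
      then show ?thesis by (simp add: pconj_wick pconj_pconj)
    qed
    show "pconj x \<in> KK n h" if "x \<in> KK n h" for x using conj that .
  qed
qed

theorem lemma6p1:
  fixes n :: nat and h :: real
  assumes "h \<noteq> 0" and "\<forall>k::nat. k \<ge> 1 \<longrightarrow> h \<noteq> 1 / real k"
  shows "Psi n h ` Pkk n = Psi0 n ` Pkk n
    \<and> {f \<in> Pkk n. Psi n h f = (\<lambda>_. 0)} = gen_star_ideal n h {Jpoly n - onep}
    \<and> (\<forall>f\<in>Pkk n. \<forall>p\<in>CP n. Psi n h (pconj f) p = cnj (Psi n h f p))"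
proof (intro conjI)
  show "Psi n h ` Pkk n = Psi0 n ` Pkk n" by (rule part1[OF assms])
  show "\<forall>f\<in>Pkk n. \<forall>p\<in>CP n. Psi n h (pconj f) p = cnj (Psi n h f p)"
    by (auto intro: part3)
  have JK: "Jpoly n - onep \<in> KK n h"
  proof -
    have "Jpoly n - onep = wick n h onep (Jpoly n - onep)"
      unfolding WJ by (rule Jm_eq)
    then show ?thesis using Psi_wickJ[OF assms(1) onep_Pkk, of n] Jm_Pkk by (auto simp: KK_def)
  qed
  show "{f \<in> Pkk n. Psi n h f = (\<lambda>_. 0)} = gen_star_ideal n h {Jpoly n - onep}"
  proof
    show "{f \<in> Pkk n. Psi n h f = (\<lambda>_. 0)} \<subseteq> gen_star_ideal n h {Jpoly n - onep}"
    proof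
      fix x assume x: "x \<in> {f \<in> Pkk n. Psi n h f = (\<lambda>_. 0)}"
      then obtain b where b: "b \<in> Pkk n" and xb: "x = wick n h b (Jpoly n - onep)"
        using kernel_rep[OF assms] by blast
      show "x \<in> gen_star_ideal n h {Jpoly n - onep}"
        unfolding gen_star_ideal_def
      proof
        fix I assume "I \<in> {I. star_ideal n h I \<and> {Jpoly n - onep} \<subseteq> I}"
        then have I: "star_ideal n h I" "Jpoly n - onep \<in> I" by auto
        then show "x \<in> I" using b unfolding xb star_ideal_def by blast
      qed
    qed
    show "gen_star_ideal n h {Jpoly n - onep} \<subseteq> {f \<in> Pkk n. Psi n h f = (\<lambda>_. 0)}"
      unfolding gen_star_ideal_def
      using KK_star_ideal[OF assms, of n] JK by (auto simp: KK_def)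
  qed
qed


end
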